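(* There is a deterministic single-tape Turing machine $\mathcal{M}_{\mathrm{SS}}$ with a fixed finite set of states and a fixed finite tape alphabet such that for every input string $w$ of length $n$ of the form \[ w = S\_@\_a_1\_a_2\_\cdots\_a_k\_\#\, b_1\_b_2\_\cdots\_b_m\_; \] where $S,a_1,\dots,a_k,b_1,\dots,b_m$ are nonnegative integers written in decimal: (i) $\mathcal{M}_{\mathrm{SS}}$ accepts $w$ if and only if the certificate $b_1,\dots,b_m$ encodes a valid subset of the input list whose sum equals the target, i.e. there are pairwise distinct indices $i_1,\dots,i_m\in\{1,\dots,k\}$ with $b_j=a_{i_j}$ for all $j$ and $\sum_{j=1}^m b_j=S$; and (ii) $\mathcal{M}_{\mathrm{SS}}$ halts in $O(n^2)$ time and uses $O(n)$ tape space. Hence \textsc{Subset-Sum} admits a deterministic quadratic-time and linear-space verifier.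
   Context: The input occupies tape cells $0,\dots,n-1$, the head starts at cell $0$, and all other cells are blank (the tape is infinite in both directions). The symbol $\_$ is a (non-blank) number delimiter, $@$ separates the target $S$ from the list $a_1,\dots,a_k$, $\#$ separates the list from the certificate, and $;$ terminates the certificate. The list $a_1,\dots,a_k$ may contain repeated values (it is treated as a multiset; equal values at different positions are distinct elements). *)

theory Defs
  imports Main
begin

text \<open>States are the naturals below tm_nstates, tape symbols the naturals below
tm_nsyms. Symbol 0 is the blank. Moves are -1 (left), 0 (stay), 1 (right).\<close>

record tm =
  tm_nstates :: nat
  tm_nsyms   :: nat
  tm_delta   :: "nat \<Rightarrow> nat \<Rightarrow> nat \<times> nat \<times> int"
  tm_start   :: nat
  tm_accept  :: nat
  tm_reject  :: nat

definition blank_sym :: nat where "blank_sym = 0"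
definition digit_sym :: "nat \<Rightarrow> nat" where "digit_sym d = d + 1"
definition us_sym :: nat where "us_sym = 11"
definition at_sym :: nat where "at_sym = 12"
definition hash_sym :: nat where "hash_sym = 13"
definition semi_sym :: nat where "semi_sym = 14"

definition wf_tm :: "tm \<Rightarrow> bool" where
  "wf_tm M \<longleftrightarrow>
     15 \<le> tm_nsyms M \<and>
     tm_start M < tm_nstates M \<and> tm_accept M < tm_nstates M \<and> tm_reject M < tm_nstates M \<and>
     tm_accept M \<noteq> tm_reject M \<and>
     (\<forall>q < tm_nstates M. \<forall>s < tm_nsyms M.
        (case tm_delta M q s of (q', s', d) \<Rightarrow>
           q' < tm_nstates M \<and> s' < tm_nsyms M \<and> d \<in> {-1, 0, 1}))"

type_synonym config = "nat \<times> (int \<Rightarrow> nat) \<times> int"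

definition halted :: "tm \<Rightarrow> config \<Rightarrow> bool" where
  "halted M c \<longleftrightarrow> fst c = tm_accept M \<or> fst c = tm_reject M"

definition tm_step :: "tm \<Rightarrow> config \<Rightarrow> config" where
  "tm_step M c = (case c of (q, tp, h) \<Rightarrow>
     if halted M c then c
     else (case tm_delta M q (tp h) of (q', s', d) \<Rightarrow> (q', tp(h := s'), h + d)))"

definition initial_config :: "tm \<Rightarrow> nat list \<Rightarrow> config" where
  "initial_config M w =
     (tm_start M, (\<lambda>i. if 0 \<le> i \<and> i < int (length w) then w ! nat i else blank_sym), 0)"

definition tm_run :: "tm \<Rightarrow> nat list \<Rightarrow> nat \<Rightarrow> config" where
  "tm_run M w t = (tm_step M ^^ t) (initial_config M w)"

definition halts_at :: "tm \<Rightarrow> nat list \<Rightarrow> nat \<Rightarrow> bool" where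
  "halts_at M w t \<longleftrightarrow> halted M (tm_run M w t) \<and> (\<forall>t' < t. \<not> halted M (tm_run M w t'))"

definition space_used :: "tm \<Rightarrow> nat list \<Rightarrow> nat \<Rightarrow> nat" where
  "space_used M w t = card ((\<lambda>t'. snd (snd (tm_run M w t'))) ` {..t})"

fun decimal_digits :: "nat \<Rightarrow> nat list" where
  "decimal_digits n = (if n < 10 then [n] else decimal_digits (n div 10) @ [n mod 10])"

definition enc_num :: "nat \<Rightarrow> nat list" where
  "enc_num n = map digit_sym (decimal_digits n)"

definition ss_input :: "nat \<Rightarrow> nat list \<Rightarrow> nat list \<Rightarrow> nat list" where
  "ss_input S as bs =
     enc_num S @ [us_sym, at_sym, us_sym] @
     concat (map (\<lambda>a. enc_num a @ [us_sym]) as) @ [hash_sym] @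
     concat (map (\<lambda>b. enc_num b @ [us_sym]) bs) @ [semi_sym]"

definition valid_certificate :: "nat \<Rightarrow> nat list \<Rightarrow> nat list \<Rightarrow> bool" where
  "valid_certificate S as bs \<longleftrightarrow>
     (\<exists>f :: nat \<Rightarrow> nat. inj_on f {..<length bs} \<and>
        (\<forall>j < length bs. f j < length as \<and> bs ! j = as ! f j) \<and>
        sum_list bs = S)"

end

theory Submission
  imports Defs
begin

definition dA :: "nat \<Rightarrow> nat \<Rightarrow> nat \<times> nat \<times> int" where
"dA q s = (
  if q = 0 then (if s = 13 then (1, 13, 1) else (0, s, 1))
  else if q = 1 then (if s = 11 then (2, 11, -1) else if s = 14 then (8, 14, -1) else (1, s, 1))
  else if q = 2 then (if 15 \<le> s \<and> s \<le> 24 then (2, s, -1)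
                      else if 1 \<le> s \<and> s \<le> 10 then (20 + (s - 1), s + 14, -1) else (3, s, 1))
  else if q = 3 then (if s = 11 then (4, 27, -1) else (3, s, 1))
  else if q = 4 then (if s = 12 then (5, 12, -1) else (4, s, -1))
  else if q = 5 then (if s = 0 then (6, 0, 1) else if 15 \<le> s \<and> s \<le> 24 then (5, s - 14, -1) else (5, s, -1))
  else if q = 6 then (if s = 12 then (7, 12, 1) else (6, s, 1))
  else if q = 7 then (14, s, 1)
  else if q = 8 then (if s = 12 then (9, 12, -1) else (8, s, -1))
  else if q = 9 then (10, s, -1)
  else if q = 10 then (if s = 1 then (10, 1, -1) else if s = 0 then (11, 0, 0) else (12, s, 0))
  else if q = 11 then (11, s, 0)
  else (12, s, 0))"

definition selA :: "bool \<Rightarrow> bool \<Rightarrow> nat" where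
  "selA f a = 13 + (if f then 2 else 0) + (if a then 1 else 0)"

definition dS :: "bool \<Rightarrow> bool \<Rightarrow> nat \<Rightarrow> nat \<times> nat \<times> int" where
"dS f a s = (
     if 1 \<le> s \<and> s \<le> 10 then (selA f False, s, 1)
     else if 15 \<le> s \<and> s \<le> 24 then (selA f a, s - 14, 1)
     else if s = 11 then (if \<not> f \<and> a then (selA True True, 26, 1) else (selA f True, 11, 1))
     else if s = 25 then (selA f True, 11, 1)
     else if s = 26 then (selA f True, 26, 1)
     else if s = 13 then (if f then (1, 13, 1) else (12, 13, 0))
     else (12, s, 0))"

definition dB :: "nat \<Rightarrow> nat \<Rightarrow> nat \<Rightarrow> nat \<times> nat \<times> int" where
"dB b d s = (
  if b = 2 then (if s = 12 then (30 + d, 12, -1) else (20 + d, s, -1))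
  else if b = 3 then (
     if 1 \<le> s \<and> s \<le> 10 then
       (if d \<le> s - 1 then (50 + d, s - 1 - d + 15, 1) else (40 + d, s - 1 + 10 - d + 15, -1))
     else if s = 0 then (12, 0, 0) else (30 + d, s, -1))
  else if b = 4 then
     (if s = 1 then (40 + d, 10, -1) else if 2 \<le> s \<and> s \<le> 10 then (50 + d, s - 1, 1) else (12, s, 0))
  else if b = 5 then (if s = 12 then (60 + d, 12, 1) else (50 + d, s, 1))
  else if b = 6 then (70 + d, s, 1)
  else if b = 7 then
     (if 1 \<le> s \<and> s \<le> 10 then (70 + d, s, 1) else if s = 13 then (1, 13, 1) else (80 + d, s, -1))
  else if b = 8 then
     (if 1 \<le> s \<and> s \<le> 10 \<and> s - 1 = d then (90 + d, d + 15, 1) else (100 + d, s, 1))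
  else if b = 9 then
     (if 15 \<le> s \<and> s \<le> 24 then (90 + d, s, 1) else (70 + d, s, 1))
  else if b = 10 then
     (if 15 \<le> s \<and> s \<le> 24 then (100 + d, s, 1) else if s = 11 then (70 + d, 25, 1) else (70 + d, s, 1))
  else (12, s, 0))"

definition dlt :: "nat \<Rightarrow> nat \<Rightarrow> nat \<times> nat \<times> int" where
"dlt q s = (if q < 13 then dA q s
            else if q < 17 then dS (15 \<le> q) (q = 14 \<or> q = 16) s
            else if 20 \<le> q \<and> q < 110 then dB (q div 10) (q mod 10) s
            else (12, s, 0))"

definition MSS :: tm where
  "MSS = \<lparr>tm_nstates = 110, tm_nsyms = 28, tm_delta = dlt, tm_start = 0, tm_accept = 11, tm_reject = 12\<rparr>"

definition okr :: "nat \<times> nat \<times> int \<Rightarrow> bool" where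
  "okr r \<longleftrightarrow> fst r < 110 \<and> fst (snd r) < 28 \<and> snd (snd r) \<in> {-1, 0, 1}"

lemma selA_lt: "selA f a < 110"
  by (simp add: selA_def)

lemma dA_ok: "q < 13 \<Longrightarrow> s < 28 \<Longrightarrow> okr (dA q s)"
proof -
  assume "q < 13" "s < 28"
  then have "q = 0 \<or> q = 1 \<or> q = 2 \<or> q = 3 \<or> q = 4 \<or> q = 5 \<or> q = 6 \<or> q = 7 \<or> q = 8 \<or> q = 9
     \<or> q = 10 \<or> q = 11 \<or> q = 12" by arith
  then show ?thesis using \<open>s < 28\<close> by (elim disjE) (auto simp: dA_def okr_def)
qed

lemma dS_ok: "s < 28 \<Longrightarrow> okr (dS f a s)"
  by (auto simp: dS_def okr_def selA_lt)

lemma dB_ok: "b < 11 \<Longrightarrow> d < 10 \<Longrightarrow> s < 28 \<Longrightarrow> okr (dB b d s)"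
  unfolding dB_def okr_def by auto

lemma dlt_ok: "q < 110 \<Longrightarrow> s < 28 \<Longrightarrow> okr (dlt q s)"
  unfolding dlt_def using dA_ok dS_ok dB_ok[of "q div 10" "q mod 10" s]
  by (auto simp: okr_def)

lemma wf_MSS: "wf_tm MSS"
  unfolding wf_tm_def MSS_def
  using dlt_ok by (auto simp: okr_def split: prod.splits) (metis fst_conv snd_conv)+

definition tape_of :: "nat list \<Rightarrow> int \<Rightarrow> nat" where
  "tape_of T = (\<lambda>i. if 0 \<le> i \<and> i < int (length T) then T ! nat i else 0)"

lemma step_simp: "q \<noteq> 11 \<Longrightarrow> q \<noteq> 12 \<Longrightarrow>
  tm_step MSS (q, tp, h) = (case dlt q (tp h) of (q', s', d) \<Rightarrow> (q', tp(h := s'), h + d))"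
  by (simp add: tm_step_def halted_def MSS_def)

lemma halt_fix: "q = 11 \<or> q = 12 \<Longrightarrow> tm_step MSS (q, tp, h) = (q, tp, h)"
  by (auto simp add: tm_step_def halted_def MSS_def)

lemma tape_read: "tape_of (pre @ x # suf) (int (length pre)) = x"
  by (simp add: tape_of_def)

lemma nth_upd_mid: "n \<noteq> length pre \<Longrightarrow> (pre @ x # suf) ! n = (pre @ s # suf) ! n"
  by (simp add: nth_append nth_Cons')

lemma tape_write: "(tape_of (pre @ x # suf))(int (length pre) := s) = tape_of (pre @ s # suf)"
proof
  fix i
  show "((tape_of (pre @ x # suf))(int (length pre) := s)) i = tape_of (pre @ s # suf) i"
  proof (cases "i = int (length pre)")
    case True then show ?thesis by (simp add: tape_of_def)
  next
    case False
    then have "0 \<le> i \<Longrightarrow> nat i \<noteq> length pre" by auto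
    then show ?thesis using False nth_upd_mid[of "nat i" pre x suf s] by (auto simp add: tape_of_def)
  qed
qed

lemma tape_blank: "tape_of T (-1) = 0"
  by (simp add: tape_of_def)

definition pos :: "config \<Rightarrow> int" where "pos c = snd (snd c)"

definition reach :: "nat \<Rightarrow> config \<Rightarrow> nat \<Rightarrow> config \<Rightarrow> bool" where
  "reach N c k c' \<longleftrightarrow> (tm_step MSS ^^ k) c = c' \<and>
     (\<forall>i\<le>k. -1 \<le> pos ((tm_step MSS ^^ i) c) \<and> pos ((tm_step MSS ^^ i) c) \<le> int N)"

lemma reach_trans:
  assumes "reach N c k1 c1" "reach N c1 k2 c2"
  shows "reach N c (k1 + k2) c2"
  unfolding reach_def
proof (intro conjI allI impI)
  have e1: "(tm_step MSS ^^ k1) c = c1" and e2: "(tm_step MSS ^^ k2) c1 = c2"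
    using assms by (auto simp: reach_def)
  show "(tm_step MSS ^^ (k1 + k2)) c = c2"
    by (metis (no_types) add.commute comp_apply funpow_add e1 e2)
  fix i assume i: "i \<le> k1 + k2"
  have "-1 \<le> pos ((tm_step MSS ^^ i) c) \<and> pos ((tm_step MSS ^^ i) c) \<le> int N"
  proof (cases "i \<le> k1")
    case True then show ?thesis using assms(1) by (auto simp: reach_def)
  next
    case False
    then obtain j where j: "i = j + k1" "j \<le> k2" using i by (metis add.commute le_add_diff_inverse nat_le_linear add_le_cancel_left)
    have "(tm_step MSS ^^ i) c = (tm_step MSS ^^ j) c1"
      by (simp add: j funpow_add e1)
    then show ?thesis using assms(2) j by (auto simp: reach_def)
  qed
  then show "-1 \<le> pos ((tm_step MSS ^^ i) c)" "pos ((tm_step MSS ^^ i) c) \<le> int N" by auto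
qed

lemma reach_0: "-1 \<le> pos c \<Longrightarrow> pos c \<le> int N \<Longrightarrow> reach N c 0 c"
  by (simp add: reach_def)

lemma reach_one:
  assumes "tm_step MSS c = c'" "-1 \<le> pos c" "pos c \<le> int N" "-1 \<le> pos c'" "pos c' \<le> int N"
  shows "reach N c 1 c'"
  unfolding reach_def using assms by (auto simp: le_Suc_eq)

lemma ST:
  assumes "q \<noteq> 11" "q \<noteq> 12" "dlt q x = (q', s, dir)" "T = pre @ x # suf" "T' = pre @ s # suf"
    "h = int (length pre)" "h' = h + dir" "length T \<le> N" "-1 \<le> h'" "h' \<le> int N"
  shows "reach N (q, tape_of T, h) 1 (q', tape_of T', h')"
proof (rule reach_one)
  show "tm_step MSS (q, tape_of T, h) = (q', tape_of T', h')"
    using assms by (simp add: step_simp tape_read tape_write)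
qed (use assms in \<open>auto simp: pos_def\<close>)

lemma ST_blank:
  assumes "q \<noteq> 11" "q \<noteq> 12" "dlt q 0 = (q', 0, dir)" "h = -1" "h' = h + dir" "-1 \<le> h'" "h' \<le> int N"
  shows "reach N (q, tape_of T, h) 1 (q', tape_of T, h')"
proof (rule reach_one)
  have "(tape_of T)(-1 := 0) = tape_of T" by (auto simp: tape_of_def)
  then show "tm_step MSS (q, tape_of T, h) = (q', tape_of T, h')"
    using assms by (simp add: step_simp tape_blank)
qed (use assms in \<open>auto simp: pos_def\<close>)

lemma RPc:
  assumes "q \<noteq> 11" "q \<noteq> 12" "\<forall>x\<in>set xs. dlt q x = (q, wr x, 1)"
    "T = pre @ xs @ suf" "T' = pre @ map wr xs @ suf" "h = int (length pre)"
    "h' = h + int (length xs)" "length T \<le> N"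
  shows "reach N (q, tape_of T, h) (length xs) (q, tape_of T', h')"
  using assms
proof (induction xs arbitrary: pre T h)
  case Nil
  then have "T' = T" "h' = h" by simp_all
  then show ?case using Nil by (auto intro!: reach_0 simp: pos_def)
next
  case (Cons x xs)
  have r1: "reach N (q, tape_of T, h) 1 (q, tape_of (pre @ wr x # xs @ suf), h + 1)"
    by (rule ST[where pre=pre and suf="xs @ suf" and x=x]) (use Cons.prems in auto)
  have r2: "reach N (q, tape_of (pre @ wr x # xs @ suf), h + 1) (length xs) (q, tape_of T', h')"
    by (rule Cons.IH[where pre="pre @ [wr x]"]) (use Cons.prems in auto)
  show ?case using reach_trans[OF r1 r2] by simp
qed

lemma RPk:
  assumes "q \<noteq> 11" "q \<noteq> 12" "\<forall>x\<in>set xs. dlt q x = (q, wr x, 1)"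
    "T = pre @ xs @ suf" "T' = pre @ map wr xs @ suf" "h = int (length pre)"
    "h' = h + int (length xs)" "length T \<le> N" "k = length xs"
  shows "reach N (q, tape_of T, h) k (q, tape_of T', h')"
  using RPc[OF assms(1-8)] assms(9) by simp

lemma LPc:
  assumes "q \<noteq> 11" "q \<noteq> 12" "\<forall>x\<in>set xs. dlt q x = (q, wr x, -1)"
    "T = pre @ xs @ suf" "T' = pre @ map wr xs @ suf" "h = int (length pre) + int (length xs) - 1"
    "h' = int (length pre) - 1" "length T \<le> N"
  shows "reach N (q, tape_of T, h) (length xs) (q, tape_of T', h')"
  using assms
proof (induction xs arbitrary: suf T h rule: rev_induct)
  case Nil
  then have "T' = T" "h' = h" by simp_all
  then show ?case using Nil by (auto intro!: reach_0 simp: pos_def)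
next
  case (snoc x xs)
  have r1: "reach N (q, tape_of T, h) 1 (q, tape_of (pre @ xs @ wr x # suf), h - 1)"
    by (rule ST[where pre="pre @ xs" and suf="suf" and x=x]) (use snoc.prems in auto)
  have r2: "reach N (q, tape_of (pre @ xs @ wr x # suf), h - 1) (length xs) (q, tape_of T', h')"
    by (rule snoc.IH[where suf="wr x # suf"]) (use snoc.prems in auto)
  show ?case using reach_trans[OF r1 r2] by simp
qed


definition carry1 :: "nat \<Rightarrow> nat" where "carry1 d = 20 + d"
definition carry2 :: "nat \<Rightarrow> nat" where "carry2 d = 30 + d"
definition borrow :: "nat \<Rightarrow> nat" where "borrow d = 40 + d"
definition ret1 :: "nat \<Rightarrow> nat" where "ret1 d = 50 + d"
definition ret2 :: "nat \<Rightarrow> nat" where "ret2 d = 60 + d"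
definition aseek :: "nat \<Rightarrow> nat" where "aseek d = 70 + d"
definition aback :: "nat \<Rightarrow> nat" where "aback d = 80 + d"
definition afok :: "nat \<Rightarrow> nat" where "afok d = 90 + d"
definition afno :: "nat \<Rightarrow> nat" where "afno d = 100 + d"

lemmas st_defs = carry1_def carry2_def borrow_def ret1_def ret2_def aseek_def aback_def afok_def afno_def

lemma dlt_band: "2 \<le> b \<Longrightarrow> b \<le> 10 \<Longrightarrow> d < 10 \<Longrightarrow> dlt (10 * b + d) s = dB b d s"
proof -
  assume a: "2 \<le> b" "b \<le> 10" "d < 10"
  have "(10 * b + d) div 10 = b" "(10 * b + d) mod 10 = d" using a by auto
  moreover have "\<not> (10 * b + d < 17)" "20 \<le> 10 * b + d" "10 * b + d < 110" using a by auto
  ultimately show ?thesis by (simp add: dlt_def)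
qed

lemma d_carry1: "d < 10 \<Longrightarrow> dlt (carry1 d) s = (if s = 12 then (carry2 d, 12, -1) else (carry1 d, s, -1))"
  using dlt_band[of 2 d s] by (simp add: dB_def st_defs)
lemma d_carry2: "d < 10 \<Longrightarrow> dlt (carry2 d) s = (
     if 1 \<le> s \<and> s \<le> 10 then
       (if d \<le> s - 1 then (ret1 d, s - 1 - d + 15, 1) else (borrow d, s - 1 + 10 - d + 15, -1))
     else if s = 0 then (12, 0, 0) else (carry2 d, s, -1))"
  using dlt_band[of 3 d s] by (simp add: dB_def st_defs)
lemma d_borrow: "d < 10 \<Longrightarrow> dlt (borrow d) s =
     (if s = 1 then (borrow d, 10, -1) else if 2 \<le> s \<and> s \<le> 10 then (ret1 d, s - 1, 1) else (12, s, 0))"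
  using dlt_band[of 4 d s] by (simp add: dB_def st_defs)
lemma d_ret1: "d < 10 \<Longrightarrow> dlt (ret1 d) s = (if s = 12 then (ret2 d, 12, 1) else (ret1 d, s, 1))"
  using dlt_band[of 5 d s] by (simp add: dB_def st_defs)
lemma d_ret2: "d < 10 \<Longrightarrow> dlt (ret2 d) s = (aseek d, s, 1)"
  using dlt_band[of 6 d s] by (simp add: dB_def st_defs)
lemma d_aseek: "d < 10 \<Longrightarrow> dlt (aseek d) s =
     (if 1 \<le> s \<and> s \<le> 10 then (aseek d, s, 1) else if s = 13 then (1, 13, 1) else (aback d, s, -1))"
  using dlt_band[of 7 d s] by (simp add: dB_def st_defs)
lemma d_aback: "d < 10 \<Longrightarrow> dlt (aback d) s =
     (if 1 \<le> s \<and> s \<le> 10 \<and> s - 1 = d then (afok d, d + 15, 1) else (afno d, s, 1))"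
  using dlt_band[of 8 d s] by (simp add: dB_def st_defs)
lemma d_afok: "d < 10 \<Longrightarrow> dlt (afok d) s = (if 15 \<le> s \<and> s \<le> 24 then (afok d, s, 1) else (aseek d, s, 1))"
  using dlt_band[of 9 d s] by (simp add: dB_def st_defs)
lemma d_afno: "d < 10 \<Longrightarrow> dlt (afno d) s =
     (if 15 \<le> s \<and> s \<le> 24 then (afno d, s, 1) else if s = 11 then (aseek d, 25, 1) else (aseek d, s, 1))"
  using dlt_band[of 10 d s] by (simp add: dB_def st_defs)

lemma d_sel: "dlt (selA f a) s = dS f a s"
  by (cases f; cases a) (simp_all add: dlt_def selA_def)

lemma d_small: "q < 13 \<Longrightarrow> dlt q s = dA q s"
  by (simp add: dlt_def)

lemma st_ne: "carry1 d \<noteq> 11" "carry1 d \<noteq> 12" "carry2 d \<noteq> 11" "carry2 d \<noteq> 12"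
  "borrow d \<noteq> 11" "borrow d \<noteq> 12" "ret1 d \<noteq> 11" "ret1 d \<noteq> 12" "ret2 d \<noteq> 11" "ret2 d \<noteq> 12"
  "aseek d \<noteq> 11" "aseek d \<noteq> 12" "aback d \<noteq> 11" "aback d \<noteq> 12" "afok d \<noteq> 11" "afok d \<noteq> 12"
  "afno d \<noteq> 11" "afno d \<noteq> 12" "selA f a \<noteq> 11" "selA f a \<noteq> 12"
  by (auto simp: st_defs selA_def)

lemma LPk:
  assumes "q \<noteq> 11" "q \<noteq> 12" "\<forall>x\<in>set xs. dlt q x = (q, wr x, -1)"
    "T = pre @ xs @ suf" "T' = pre @ map wr xs @ suf" "h = int (length pre) + int (length xs) - 1"
    "h' = int (length pre) - 1" "length T \<le> N" "k = length xs"
  shows "reach N (q, tape_of T, h) k (q, tape_of T', h')"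
  using LPc[OF assms(1-8)] assms(9) by simp

declare decimal_digits.simps[simp del]

definition val :: "nat list \<Rightarrow> nat" where
  "val xs = foldl (\<lambda>a x. 10 * a + x) 0 xs"

lemma val_Nil[simp]: "val [] = 0" by (simp add: val_def)

lemma val_single[simp]: "val [x] = x" by (simp add: val_def)

lemma val_snoc[simp]: "val (xs @ [x]) = 10 * val xs + x" by (simp add: val_def)

lemma val_append: "val (xs @ ys) = val xs * 10 ^ length ys + val ys"
  by (induction ys rule: rev_induct) (simp_all flip: append_assoc add: algebra_simps)

lemma val_Cons: "val (x # xs) = x * 10 ^ length xs + val xs"
  using val_append[of "[x]" xs] by simp

lemma val_lt: "\<forall>x\<in>set xs. x < 10 \<Longrightarrow> val xs < 10 ^ length xs"
  by (induction xs rule: rev_induct) auto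

lemma dd_val: "val (decimal_digits n) = n"
  by (induction n rule: decimal_digits.induct) (subst decimal_digits.simps, simp)

lemma dd_lt: "\<forall>x\<in>set (decimal_digits n). x < 10"
  by (induction n rule: decimal_digits.induct) (subst decimal_digits.simps, auto)

lemma dd_ne: "decimal_digits n \<noteq> []"
  by (subst decimal_digits.simps) auto

lemma dd_inj: "decimal_digits a = decimal_digits b \<Longrightarrow> a = b"
  by (metis dd_val)

lemma dd_bound: "n < 10 ^ length (decimal_digits n)"
  using val_lt[OF dd_lt[of n]] dd_val[of n] by simp

lemma dd_low: "10 ^ (length (decimal_digits n) - 1) \<le> max 1 n"
proof (induction n rule: decimal_digits.induct)
  case (1 n)
  show ?case
  proof (cases "n < 10")
    case True then show ?thesis by (subst decimal_digits.simps) simp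
  next
    case False
    have e: "decimal_digits n = decimal_digits (n div 10) @ [n mod 10]"
      using False by (subst decimal_digits.simps) simp
    have ih: "10 ^ (length (decimal_digits (n div 10)) - 1) \<le> max 1 (n div 10)"
      using 1 False by simp
    have ne: "length (decimal_digits (n div 10)) \<ge> 1" using dd_ne by (simp add: Suc_leI)
    have "n div 10 \<ge> 1" using False by simp
    then have "10 ^ (length (decimal_digits (n div 10))) \<le> 10 * (n div 10)"
      using ih ne by (metis Suc_diff_1 max_def le_numeral_extra(1) less_le_trans mult_le_mono2 power_Suc
          zero_less_one not_le)
    also have "\<dots> \<le> n" by simp
    finally show ?thesis using e by simp
  qed
qed

definition unm :: "nat \<Rightarrow> nat" where "unm x = x + 1"
definition mkd :: "nat \<Rightarrow> nat" where "mkd x = x + 15"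

lemma enc_num_unm: "enc_num n = map unm (decimal_digits n)"
  by (simp add: enc_num_def unm_def digit_sym_def[abs_def])

type_synonym rec = "nat list \<times> nat list \<times> nat"

fun rr :: "rec \<Rightarrow> nat list" where
  "rr (u, v, st) = map unm u @ map mkd v @ [st]"

definition tapeL :: "nat list \<Rightarrow> nat list \<Rightarrow> rec list \<Rightarrow> rec list \<Rightarrow> nat list" where
  "tapeL su sv ar br = map unm su @ map mkd sv @ [11, 12, 11] @ concat (map rr ar) @ [13] @
      concat (map rr br) @ [14]"

fun procA :: "nat \<Rightarrow> rec \<Rightarrow> rec" where
  "procA d (u, v, st) = (if u \<noteq> [] \<and> last u = d then (butlast u, d # v, st)
                         else (u, v, if st = 11 then 25 else st))"

definition digs :: "nat list \<Rightarrow> bool" where "digs xs \<longleftrightarrow> (\<forall>x\<in>set xs. x < 10)"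

lemma fin_af:
  assumes "d < 10" "digs v" "st \<in> {11, 25, 26}" "q = afok d \<or> q = afno d"
    "T = pre @ map mkd v @ st # suf" "T' = pre @ map mkd v @ st' # suf"
    "st' = (if q = afno d \<and> st = 11 then 25 else st)" "length T \<le> N"
    "h = int (length pre)" "h' = int (length pre + length v + 1)"
  shows "reach N (q, tape_of T, h) (length v + 1) (aseek d, tape_of T', h')"
proof -
  have r1: "reach N (q, tape_of T, h) (length v) (q, tape_of T, h + int (length v))"
    by (rule RPk[where pre=pre and xs="map mkd v" and suf="st # suf" and wr="\<lambda>x. x"])
       (use assms in \<open>auto simp: st_ne d_afok d_afno mkd_def digs_def\<close>)
  have r2: "reach N (q, tape_of T, h + int (length v)) 1 (aseek d, tape_of T', h')"
    by (rule ST[where pre="pre @ map mkd v" and suf="suf" and x=st and s=st'])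
       (use assms in \<open>auto simp: st_ne d_afok d_afno\<close>)
  show ?thesis using reach_trans[OF r1 r2] by simp
qed

lemma len_rr[simp]: "length (rr r) = length (fst r) + length (fst (snd r)) + 1"
  by (cases r) auto

lemma last_rr[simp]: "last (rr r) = snd (snd r)"
  by (cases r) auto

lemma rr_ne[simp]: "rr r \<noteq> []"
  by (cases r) auto

lemma A_rec:
  assumes "d < 10" "digs u" "digs v" "st \<in> {11, 25, 26}" "pre \<noteq> []" "last pre \<in> {11, 25, 26}"
    "T = pre @ rr (u, v, st) @ suf" "T' = pre @ rr (procA d (u, v, st)) @ suf" "length T \<le> N"
    "h = int (length pre)" "h' = int (length pre + length u + length v + 1)"
  shows "reach N (aseek d, tape_of T, h) (length u + length v + 3) (aseek d, tape_of T', h')"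
proof -
  have r1: "reach N (aseek d, tape_of T, h) (length u) (aseek d, tape_of T, h + int (length u))"
    by (rule RPk[where pre=pre and xs="map unm u" and suf="map mkd v @ st # suf" and wr="\<lambda>x. x"])
       (use assms in \<open>auto simp: st_ne d_aseek unm_def digs_def\<close>)
  obtain c rest where cr: "map mkd v @ [st] = c # rest" and cc: "c = st \<or> c \<in> set (map mkd v)"
    by (cases v) auto
  have cd: "dlt (aseek d) c = (aback d, c, -1)"
    using cc assms(1,3,4) by (auto simp: d_aseek mkd_def digs_def)
  have r2: "reach N (aseek d, tape_of T, h + int (length u)) 1 (aback d, tape_of T, h + int (length u) - 1)"
    by (rule ST[where pre="pre @ map unm u" and suf="rest @ suf" and x=c and s=c])
       (use assms cr cd in \<open>auto simp: st_ne\<close>)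
  note r12 = reach_trans[OF r1 r2]
  show ?thesis
  proof (cases u rule: rev_exhaust)
    case Nil
    obtain p0 l where pl: "pre = p0 @ [l]" using assms(5) by (metis append_butlast_last_id)
    have l: "l \<in> {11, 25, 26}" using assms(6) pl by simp
    have ld: "dlt (aback d) l = (afno d, l, 1)"
      using l assms(1) by (auto simp: d_aback)
    have r3: "reach N (aback d, tape_of T, h + int (length u) - 1) 1 (afno d, tape_of T, h + int (length u))"
      by (rule ST[where pre="p0" and suf="rr (u, v, st) @ suf" and x=l and s=l])
         (use assms ld pl Nil in \<open>auto simp: st_ne\<close>)
    have r4: "reach N (afno d, tape_of T, h + int (length u)) (length v + 1) (aseek d, tape_of T', h')"
      by (rule fin_af[where pre=pre and v=v and st=st and suf=suf])
         (use assms Nil in \<open>auto\<close>)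
    show ?thesis using reach_trans[OF reach_trans[OF r12 r3] r4] Nil by (simp add: eval_nat_numeral)
  next
    case (snoc u0 x)
    have x: "x < 10" using assms(2) snoc by (simp add: digs_def)
    show ?thesis
    proof (cases "x = d")
      case True
      have xd: "dlt (aback d) (unm x) = (afok d, mkd d, 1)"
        using True assms(1) by (simp add: d_aback unm_def mkd_def)
      have r3: "reach N (aback d, tape_of T, h + int (length u) - 1) 1
                  (afok d, tape_of (pre @ map unm u0 @ rr ([], d # v, st) @ suf), h + int (length u))"
        by (rule ST[where pre="pre @ map unm u0" and suf="map mkd v @ st # suf" and x="unm x" and s="mkd d"])
           (use assms xd snoc in \<open>auto simp: st_ne\<close>)
      have r4: "reach N (afok d, tape_of (pre @ map unm u0 @ rr ([], d # v, st) @ suf), h + int (length u))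
                  (length v + 1) (aseek d, tape_of T', h')"
        by (rule fin_af[where pre="pre @ map unm u0 @ [mkd d]" and v=v and st=st and suf=suf])
           (use assms snoc True in \<open>auto simp: st_defs\<close>)
      show ?thesis using reach_trans[OF reach_trans[OF r12 r3] r4] snoc by (simp add: eval_nat_numeral)
    next
      case False
      have xd: "dlt (aback d) (unm x) = (afno d, unm x, 1)"
        using False assms(1) by (simp add: d_aback unm_def)
      have r3: "reach N (aback d, tape_of T, h + int (length u) - 1) 1
                  (afno d, tape_of T, h + int (length u))"
        by (rule ST[where pre="pre @ map unm u0" and suf="map mkd v @ st # suf" and x="unm x" and s="unm x"])
           (use assms xd snoc in \<open>auto simp: st_ne\<close>)
      have r4: "reach N (afno d, tape_of T, h + int (length u)) (length v + 1) (aseek d, tape_of T', h')"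
        by (rule fin_af[where pre="pre @ map unm u" and v=v and st=st and suf=suf])
           (use assms snoc False in \<open>auto\<close>)
      show ?thesis using reach_trans[OF reach_trans[OF r12 r3] r4] snoc by (simp add: eval_nat_numeral)
    qed
  qed
qed

definition recok :: "rec \<Rightarrow> bool" where
  "recok r \<longleftrightarrow> digs (fst r) \<and> digs (fst (snd r)) \<and> snd (snd r) \<in> {11, 25, 26}"

lemma len_procA[simp]: "length (rr (procA d r)) = length (rr r)"
  by (cases r) auto

lemma len_procA2[simp]: "length (fst (procA d r)) + length (fst (snd (procA d r))) = length (fst r) + length (fst (snd r))"
  by (cases r) auto

lemma st_procA: "snd (snd r) \<in> {11, 25, 26} \<Longrightarrow> snd (snd (procA d r)) \<in> {11, 25, 26}"
  by (cases r) auto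

lemma A_reg:
  assumes "d < 10" "\<forall>r\<in>set rs. recok r" "pre \<noteq> []" "last pre \<in> {11, 25, 26}"
    "T = pre @ concat (map rr rs) @ suf" "T' = pre @ concat (map rr (map (procA d) rs)) @ suf"
    "length T \<le> N" "h = int (length pre)" "h' = int (length pre + length (concat (map rr rs)))"
  shows "\<exists>k \<le> 3 * length (concat (map rr rs)). reach N (aseek d, tape_of T, h) k (aseek d, tape_of T', h')"
  using assms
proof (induction rs arbitrary: pre T h)
  case Nil
  then have "T' = T" "h' = h" by simp_all
  then show ?case using Nil by (auto intro!: reach_0 simp: pos_def)
next
  case (Cons r rs)
  obtain u v st where r: "r = (u, v, st)" by (cases r) auto
  have ok: "digs u" "digs v" "st \<in> {11, 25, 26}" using Cons.prems(2) r by (auto simp: recok_def)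
  have r1: "reach N (aseek d, tape_of T, h) (length u + length v + 3)
     (aseek d, tape_of (pre @ rr (procA d r) @ concat (map rr rs) @ suf), h + int (length (rr r)))"
    by (rule A_rec[where pre=pre and suf="concat (map rr rs) @ suf"])
       (use Cons.prems ok r in auto)
  have l: "last (pre @ rr (procA d r)) \<in> {11, 25, 26}"
    using st_procA[of r d] ok r by simp
  have "\<exists>k \<le> 3 * length (concat (map rr rs)). 
     reach N (aseek d, tape_of (pre @ rr (procA d r) @ concat (map rr rs) @ suf), h + int (length (rr r))) k
        (aseek d, tape_of T', h')"
    by (rule Cons.IH[where pre="pre @ rr (procA d r)"]) (use Cons.prems l in auto)
  then obtain k where k: "k \<le> 3 * length (concat (map rr rs))"
     "reach N (aseek d, tape_of (pre @ rr (procA d r) @ concat (map rr rs) @ suf), h + int (length (rr r))) k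
        (aseek d, tape_of T', h')" by blast
  show ?case
    by (rule exI[where x="length u + length v + 3 + k"]) (use reach_trans[OF r1 k(2)] k(1) r in auto)
qed

fun selR :: "bool \<Rightarrow> rec \<Rightarrow> bool \<times> rec" where
  "selR f (u, v, st) = (if st = 11 \<and> \<not> f \<and> u = [] then (True, (u @ v, [], 26))
                        else if st = 26 then (f, (u @ v, [], 26)) else (f, (u @ v, [], 11)))"

fun selL :: "bool \<Rightarrow> rec list \<Rightarrow> bool \<times> rec list" where
  "selL f [] = (f, [])"
| "selL f (r # rs) = (let (f', r') = selR f r; (f'', rs') = selL f' rs in (f'', r' # rs'))"

lemma sel_u:
  assumes "digs u" "T = pre @ map unm u @ suf" "length T \<le> N" "h = int (length pre)"
    "h' = int (length pre + length u)"
  shows "reach N (selA f a, tape_of T, h) (length u) (selA f (a \<and> u = []), tape_of T, h')"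
  using assms
proof (induction u arbitrary: pre a h)
  case Nil
  then show ?case by (auto intro!: reach_0 simp: pos_def)
next
  case (Cons x u)
  have r1: "reach N (selA f a, tape_of T, h) 1 (selA f False, tape_of T, h + 1)"
    by (rule ST[where pre=pre and suf="map unm u @ suf" and x="unm x" and s="unm x"])
       (use Cons.prems in \<open>auto simp: st_ne d_sel dS_def unm_def digs_def\<close>)
  have r2: "reach N (selA f False, tape_of T, h + 1) (length u) (selA f False, tape_of T, h')"
    using Cons.IH[where pre="pre @ [unm x]" and a=False] Cons.prems by (auto simp: digs_def algebra_simps)
  show ?case using reach_trans[OF r1 r2] by simp
qed

lemma sel_rec:
  assumes "recok (u, v, st)" "T = pre @ rr (u, v, st) @ suf" "T' = pre @ rr (snd (selR f (u, v, st))) @ suf"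
    "length T \<le> N" "h = int (length pre)" "h' = int (length pre + length u + length v + 1)"
  shows "reach N (selA f True, tape_of T, h) (length u + length v + 1)
           (selA (fst (selR f (u, v, st))) True, tape_of T', h')"
proof -
  have ok: "digs u" "digs v" "st \<in> {11, 25, 26}" using assms(1) by (auto simp: recok_def)
  have r1: "reach N (selA f True, tape_of T, h) (length u) (selA f (u = []), tape_of T, h + int (length u))"
    using sel_u[of u T pre "map mkd v @ st # suf" N h "h + int (length u)" f True] assms ok by simp
  have r2: "reach N (selA f (u = []), tape_of T, h + int (length u)) (length v)
              (selA f (u = []), tape_of (pre @ map unm u @ map unm v @ st # suf), h + int (length u) + int (length v))"
    by (rule RPk[where pre="pre @ map unm u" and xs="map mkd v" and suf="st # suf" and wr="\<lambda>s. s - 14"])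
       (use assms ok in \<open>auto simp: st_ne d_sel dS_def mkd_def unm_def digs_def\<close>)
  have r3: "reach N (selA f (u = []), tape_of (pre @ map unm u @ map unm v @ st # suf), h + int (length u) + int (length v)) 1
              (selA (fst (selR f (u, v, st))) True, tape_of T', h')"
    by (rule ST[where pre="pre @ map unm u @ map unm v" and suf=suf and x=st
          and s="snd (snd (snd (selR f (u, v, st))))"])
       (use assms ok in \<open>auto simp: st_ne d_sel dS_def\<close>)
  show ?thesis using reach_trans[OF reach_trans[OF r1 r2] r3] by simp
qed

lemma selL_Cons: "selL f (r # rs) = (fst (selL (fst (selR f r)) rs), snd (selR f r) # snd (selL (fst (selR f r)) rs))"
  by (simp add: split_def Let_def)

declare selL.simps(2)[simp del]
declare selL_Cons[simp]

lemma len_selR[simp]: "length (fst (snd (selR f r))) + length (fst (snd (snd (selR f r)))) = length (fst r) + length (fst (snd r))"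
  by (cases r) auto

lemma sel_reg:
  assumes "\<forall>r\<in>set rs. recok r" "T = pre @ concat (map rr rs) @ suf"
    "T' = pre @ concat (map rr (snd (selL f rs))) @ suf" "length T \<le> N" "h = int (length pre)"
    "h' = int (length pre + length (concat (map rr rs)))"
  shows "reach N (selA f True, tape_of T, h) (length (concat (map rr rs))) (selA (fst (selL f rs)) True, tape_of T', h')"
  using assms
proof (induction rs arbitrary: f pre T h)
  case Nil
  then show ?case by (auto intro!: reach_0 simp: pos_def)
next
  case (Cons r rs)
  obtain u v st where r: "r = (u, v, st)" by (cases r) auto
  have r1: "reach N (selA f True, tape_of T, h) (length u + length v + 1)
     (selA (fst (selR f r)) True, tape_of (pre @ rr (snd (selR f r)) @ concat (map rr rs) @ suf), h + int (length (rr r)))"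
    unfolding r by (rule sel_rec[where pre=pre and suf="concat (map rr rs) @ suf"]) (use Cons.prems r in auto)
  have r2: "reach N (selA (fst (selR f r)) True, tape_of (pre @ rr (snd (selR f r)) @ concat (map rr rs) @ suf), h + int (length (rr r)))
     (length (concat (map rr rs))) (selA (fst (selL (fst (selR f r)) rs)) True, tape_of T', h')"
    by (rule Cons.IH[where pre="pre @ rr (snd (selR f r))"]) (use Cons.prems in \<open>auto simp: selL_Cons\<close>)
  have e: "length (concat (map rr (r # rs))) = length u + length v + 1 + length (concat (map rr rs))"
    using r by simp
  have R: "reach N (selA f True, tape_of T, h) (length (concat (map rr (r # rs))))
      (selA (fst (selL (fst (selR f r)) rs)) True, tape_of T', h')"
    using reach_trans[OF r1 r2] by (simp only: e)
  then show ?case by (simp only: selL_Cons fst_conv)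
qed

lemma borrow_lem:
  assumes "d < 10" "digs xs" "T = map unm xs @ suf" "length T \<le> N" "h = int (length xs) - 1"
  shows "(val xs = 0 \<and> (\<exists>k \<le> length xs + 1. \<exists>c. reach N (borrow d, tape_of T, h) k c \<and> fst c = 12)) \<or>
         (val xs > 0 \<and> (\<exists>ys zs k. k \<le> length xs \<and> digs (ys @ zs) \<and> length (ys @ zs) = length xs \<and>
             val (ys @ zs) = val xs - 1 \<and>
             reach N (borrow d, tape_of T, h) k (ret1 d, tape_of (map unm (ys @ zs) @ suf), int (length ys))))"
  using assms
proof (induction xs arbitrary: suf T h rule: rev_induct)
  case Nil
  have "reach N (borrow d, tape_of T, h) 1 (12, tape_of T, -1)"
    by (rule ST_blank) (use Nil in \<open>auto simp: st_ne d_borrow\<close>)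
  then show ?case by auto
next
  case (snoc x xs)
  have x: "x < 10" and dx: "digs xs" using snoc.prems by (auto simp: digs_def)
  show ?case
  proof (cases "x = 0")
    case True
    have r1: "reach N (borrow d, tape_of T, h) 1 (borrow d, tape_of (map unm xs @ unm 9 # suf), int (length xs) - 1)"
      by (rule ST[where pre="map unm xs" and x="unm x" and s="unm 9"]) (use snoc.prems True in \<open>auto simp: st_ne d_borrow unm_def\<close>)
    have ih: "(val xs = 0 \<and> (\<exists>k \<le> length xs + 1. \<exists>c. reach N (borrow d, tape_of (map unm xs @ unm 9 # suf), int (length xs) - 1) k c \<and> fst c = 12)) \<or>
         (val xs > 0 \<and> (\<exists>ys zs k. k \<le> length xs \<and> digs (ys @ zs) \<and> length (ys @ zs) = length xs \<and>
             val (ys @ zs) = val xs - 1 \<and>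
             reach N (borrow d, tape_of (map unm xs @ unm 9 # suf), int (length xs) - 1) k (ret1 d, tape_of (map unm (ys @ zs) @ unm 9 # suf), int (length ys))))"
      by (rule snoc.IH) (use snoc.prems dx in auto)
    then show ?thesis
    proof
      assume a: "val xs = 0 \<and> (\<exists>k \<le> length xs + 1. \<exists>c. reach N (borrow d, tape_of (map unm xs @ unm 9 # suf), int (length xs) - 1) k c \<and> fst c = 12)"
      then obtain k c where "k \<le> length xs + 1" "reach N (borrow d, tape_of (map unm xs @ unm 9 # suf), int (length xs) - 1) k c" "fst c = 12" by blast
      then have "reach N (borrow d, tape_of T, h) (1 + k) c" "1 + k \<le> length (xs @ [x]) + 1" "fst c = 12"
        using reach_trans[OF r1] by auto
      moreover have "val (xs @ [x]) = 0" using a True by simp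
      ultimately show ?thesis by blast
    next
      assume a: "val xs > 0 \<and> (\<exists>ys zs k. k \<le> length xs \<and> digs (ys @ zs) \<and> length (ys @ zs) = length xs \<and>
             val (ys @ zs) = val xs - 1 \<and>
             reach N (borrow d, tape_of (map unm xs @ unm 9 # suf), int (length xs) - 1) k (ret1 d, tape_of (map unm (ys @ zs) @ unm 9 # suf), int (length ys)))"
      then obtain ys zs k where yz: "k \<le> length xs" "digs (ys @ zs)" "length (ys @ zs) = length xs"
          "val (ys @ zs) = val xs - 1"
          "reach N (borrow d, tape_of (map unm xs @ unm 9 # suf), int (length xs) - 1) k (ret1 d, tape_of (map unm (ys @ zs) @ unm 9 # suf), int (length ys))"
        by blast
      have p: "0 < val xs" using a by simp
      have v0: "val (ys @ zs @ [9]) = 10 * val (ys @ zs) + 9" using val_snoc[of "ys @ zs" 9] by simp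
      have v: "val (ys @ zs @ [9]) = val (xs @ [x]) - 1"
        using v0 yz(4) p True by (cases "val xs") auto
      show ?thesis
        apply (intro disjI2 conjI)
        using a True apply simp
        apply (rule exI[where x=ys], rule exI[where x="zs @ [9]"], rule exI[where x="1 + k"])
        using reach_trans[OF r1 yz(5)] yz v by (auto simp: digs_def)
    qed
  next
    case False
    have r1: "reach N (borrow d, tape_of T, h) 1 (ret1 d, tape_of (map unm (xs @ [x - 1]) @ suf), int (length (xs @ [x - 1])))"
      by (rule ST[where pre="map unm xs" and x="unm x" and s="unm (x - 1)"]) (use snoc.prems False x in \<open>auto simp: st_ne d_borrow unm_def\<close>)
    show ?thesis
      apply (intro disjI2 conjI)
      using False apply simp
      apply (rule exI[where x="xs @ [x - 1]"], rule exI[where x="[]"], rule exI[where x=1])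
      using r1 False x dx by (auto simp: digs_def)
  qed
qed

lemma fin3_lem:
  assumes "digs xs" "T = map unm xs @ suf" "length T \<le> N" "h = int (length xs) - 1"
  shows "\<exists>k \<le> length xs + 1. \<exists>c. reach N (10, tape_of T, h) k c \<and> (fst c = 11 \<or> fst c = 12) \<and> (fst c = 11 \<longleftrightarrow> val xs = 0)"
  using assms
proof (induction xs arbitrary: suf T h rule: rev_induct)
  case Nil
  have "reach N (10, tape_of T, h) 1 (11, tape_of T, -1)"
    by (rule ST_blank) (use Nil in \<open>auto simp: d_small dA_def\<close>)
  then show ?case by auto
next
  case (snoc x xs)
  have x: "x < 10" and dx: "digs xs" using snoc.prems by (auto simp: digs_def)
  show ?case
  proof (cases "x = 0")
    case True
    have r1: "reach N (10, tape_of T, h) 1 (10, tape_of T, int (length xs) - 1)"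
      by (rule ST[where pre="map unm xs" and x="unm x" and s="unm x"]) (use snoc.prems True in \<open>auto simp: d_small dA_def unm_def\<close>)
    obtain k c where kc: "k \<le> length xs + 1" "reach N (10, tape_of T, int (length xs) - 1) k c" "fst c = 11 \<or> fst c = 12"
       "fst c = 11 \<longleftrightarrow> val xs = 0"
      using snoc.IH[of T "unm x # suf" "int (length xs) - 1"] snoc.prems dx by auto
    have R: "reach N (10, tape_of T, h) (1 + k) c" using reach_trans[OF r1 kc(2)] by blast
    have V: "val (xs @ [x]) = 0 \<longleftrightarrow> val xs = 0" using True by simp
    have K: "1 + k \<le> length (xs @ [x]) + 1" using kc(1) by simp
    show ?thesis
      apply (rule exI[of _ "1 + k"])
      apply (rule conjI[OF K])
      apply (rule exI[of _ c])
      using R V kc(3,4) by simp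

  next
    case False
    have r1: "reach N (10, tape_of T, h) 1 (12, tape_of T, h)"
      by (rule ST[where pre="map unm xs" and x="unm x" and s="unm x"]) (use snoc.prems False x in \<open>auto simp: d_small dA_def unm_def\<close>)
    show ?thesis
      apply (rule exI[of _ 1], rule conjI, simp)
      apply (rule exI[of _ "(12, tape_of T, h)"])
      using r1 False by simp
  qed
qed

lemma reach_eqk: "reach N c k c' \<Longrightarrow> k = k' \<Longrightarrow> reach N c k' c'"
  by simp

definition asym :: "nat \<Rightarrow> bool" where
  "asym s \<longleftrightarrow> (1 \<le> s \<and> s \<le> 10) \<or> (15 \<le> s \<and> s \<le> 24) \<or> s = 11 \<or> s = 25 \<or> s = 26"

definition dsym :: "nat \<Rightarrow> bool" where
  "dsym s \<longleftrightarrow> (15 \<le> s \<and> s \<le> 24) \<or> s = 27"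

definition drec :: "rec \<Rightarrow> bool" where
  "drec r \<longleftrightarrow> fst r = [] \<and> digs (fst (snd r)) \<and> snd (snd r) = 27"

lemma set_unm: "digs xs \<Longrightarrow> s \<in> set (map unm xs) \<Longrightarrow> 1 \<le> s \<and> s \<le> 10"
  by (auto simp: digs_def unm_def)

lemma set_mkd: "digs xs \<Longrightarrow> s \<in> set (map mkd xs) \<Longrightarrow> 15 \<le> s \<and> s \<le> 24"
  by (auto simp: digs_def mkd_def)

lemma set_A: "\<forall>r\<in>set ar. recok r \<Longrightarrow> s \<in> set (concat (map rr ar)) \<Longrightarrow> asym s"
proof -
  assume a: "\<forall>r\<in>set ar. recok r" and s: "s \<in> set (concat (map rr ar))"
  then obtain r where r: "r \<in> set ar" "s \<in> set (rr r)" by auto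
  obtain u v st where e: "r = (u, v, st)" by (cases r) auto
  have "digs u" "digs v" "st \<in> {11, 25, 26}" using a r e by (auto simp: recok_def)
  then show "asym s" using r e set_unm[of u s] set_mkd[of v s] by (auto simp: asym_def)
qed

lemma set_D: "\<forall>r\<in>set D. drec r \<Longrightarrow> s \<in> set (concat (map rr D)) \<Longrightarrow> dsym s"
proof -
  assume a: "\<forall>r\<in>set D. drec r" and s: "s \<in> set (concat (map rr D))"
  then obtain r where r: "r \<in> set D" "s \<in> set (rr r)" by auto
  obtain u v st where e: "r = (u, v, st)" by (cases r) auto
  have "u = []" "digs v" "st = 27" using a r e by (auto simp: drec_def)
  then show "dsym s" using r e set_mkd[of v s] by (auto simp: dsym_def)
qed

lemma ret_tail:
  assumes "d < 10" "T = map unm su @ map mkd sv @ [11, 12, 11] @ rest" "digs su" "digs sv"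
    "p \<le> length su + length sv" "length T \<le> N" "h = int p"
  shows "reach N (ret1 d, tape_of T, h) (length su + length sv - p + 3) (aseek d, tape_of T, int (length su + length sv + 3))"
proof -
  let ?X = "map unm su @ map mkd sv @ [11]"
  have X0: "take p ?X @ drop p ?X = ?X" by (rule append_take_drop_id)
  have X1: "T = (take p ?X @ drop p ?X) @ 12 # 11 # rest" unfolding X0 using assms(2) by simp
  have X: "T = take p ?X @ drop p ?X @ 12 # 11 # rest" using X1 by (simp only: append_assoc)
  have lx: "length (drop p ?X) = length su + length sv + 1 - p" by simp
  have sx: "\<forall>s\<in>set (drop p ?X). s \<noteq> 12"
  proof
    fix s assume "s \<in> set (drop p ?X)"
    then have "s \<in> set ?X" by (meson in_set_dropD)
    then show "s \<noteq> 12" using set_unm[OF assms(3), of s] set_mkd[OF assms(4), of s] by auto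
  qed
  have r1: "reach N (ret1 d, tape_of T, h) (length su + length sv + 1 - p) (ret1 d, tape_of T, int (length su + length sv + 1))"
    by (rule RPk[where pre="take p ?X" and xs="drop p ?X" and suf="12 # 11 # rest" and wr="\<lambda>x. x"])
       (use assms X sx in \<open>auto simp: st_ne d_ret1\<close>)
  have r2: "reach N (ret1 d, tape_of T, int (length su + length sv + 1)) 1 (ret2 d, tape_of T, int (length su + length sv + 2))"
    by (rule ST[where pre="?X" and x=12 and s=12 and suf="11 # rest"]) (use assms in \<open>auto simp: st_ne d_ret1\<close>)
  have r3: "reach N (ret2 d, tape_of T, int (length su + length sv + 2)) 1 (aseek d, tape_of T, int (length su + length sv + 3))"
    by (rule ST[where pre="?X @ [12]" and x=11 and s=11 and suf="rest"]) (use assms in \<open>auto simp: st_ne d_ret2\<close>)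
  show ?thesis by (rule reach_eqk[OF reach_trans[OF reach_trans[OF r1 r2] r3]]) (use assms(5) in simp)
qed

lemma round_front:
  assumes "digs su" "digs sv" "\<forall>r\<in>set ar. recok r" "\<forall>r\<in>set D. drec r" "digs ub0" "x < 10" "digs vb"
    "T = tapeL su sv ar (D @ [(ub0 @ [x], vb, 11)] @ F)" "T' = tapeL su sv ar (D @ [(ub0, x # vb, 11)] @ F)"
    "length T \<le> N" "h = int (length su + length sv + 4 + length (concat (map rr ar)))"
  shows "\<exists>k \<le> 4 * length T + 3. reach N (1, tape_of T, h) k (carry2 x, tape_of T', int (length su) - 1)"
proof -
  let ?Sp = "map unm su @ map mkd sv"
  let ?A = "concat (map rr ar)"
  let ?Dd = "concat (map rr D)"
  let ?Fd = "concat (map rr F)"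
  let ?pre1 = "?Sp @ [11, 12, 11] @ ?A @ [13]"
  let ?xs1 = "?Dd @ map unm ub0 @ unm x # map mkd vb"
  have T: "T = ?pre1 @ ?xs1 @ 11 # ?Fd @ [14]" using assms(8) by (simp add: tapeL_def)
  have T': "T' = ?Sp @ [11, 12, 11] @ ?A @ [13] @ ?Dd @ map unm ub0 @ mkd x # map mkd vb @ 11 # ?Fd @ [14]"
    using assms(9) by (simp add: tapeL_def)
  have c1: "\<forall>s\<in>set ?xs1. dlt 1 s = (1, s, 1)"
  proof
    fix s assume s: "s \<in> set ?xs1"
    have "dsym s \<or> (1 \<le> s \<and> s \<le> 10) \<or> (15 \<le> s \<and> s \<le> 24)"
      using s set_D[OF assms(4), of s] set_unm[OF assms(5), of s] set_mkd[OF assms(7), of s] assms(6)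
      by (auto simp: unm_def)
    then show "dlt 1 s = (1, s, 1)" by (auto simp: d_small dA_def dsym_def)
  qed
  have r1: "reach N (1, tape_of T, h) (length ?xs1) (1, tape_of T, int (length ?pre1 + length ?xs1))"
    by (rule RPk[where pre="?pre1" and xs="?xs1" and suf="11 # ?Fd @ [14]" and wr="\<lambda>x. x"])
       (use T c1 assms(10,11) in auto)
  have r2: "reach N (1, tape_of T, int (length ?pre1 + length ?xs1)) 1 (2, tape_of T, int (length ?pre1 + length ?xs1) - 1)"
    by (rule ST[where pre="?pre1 @ ?xs1" and x=11 and s=11 and suf="?Fd @ [14]"])
       (use T assms(10) in \<open>auto simp: d_small dA_def\<close>)
  have c3: "\<forall>s\<in>set (map mkd vb). dlt 2 s = (2, s, -1)"
    using set_mkd[OF assms(7)] by (auto simp: d_small dA_def)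
  have r3: "reach N (2, tape_of T, int (length ?pre1 + length ?xs1) - 1) (length vb)
             (2, tape_of T, int (length (?pre1 @ ?Dd @ map unm ub0)))"
    by (rule LPk[where pre="?pre1 @ ?Dd @ map unm ub0 @ [unm x]" and xs="map mkd vb" and suf="11 # ?Fd @ [14]" and wr="\<lambda>x. x"])
       (use T c3 assms(10) in auto)
  have r4: "reach N (2, tape_of T, int (length (?pre1 @ ?Dd @ map unm ub0))) 1
             (carry1 x, tape_of T', int (length (?pre1 @ ?Dd @ map unm ub0)) - 1)"
    by (rule ST[where pre="?pre1 @ ?Dd @ map unm ub0" and x="unm x" and s="mkd x" and suf="map mkd vb @ 11 # ?Fd @ [14]"])
       (use T T' assms(6,10) in \<open>auto simp: d_small dA_def unm_def mkd_def carry1_def\<close>)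
  let ?xs5 = "[11] @ ?A @ [13] @ ?Dd @ map unm ub0"
  have c5: "\<forall>s\<in>set ?xs5. dlt (carry1 x) s = (carry1 x, s, -1)"
  proof
    fix s assume s: "s \<in> set ?xs5"
    have "asym s \<or> dsym s \<or> (1 \<le> s \<and> s \<le> 10) \<or> s = 13"
      using s set_D[OF assms(4), of s] set_unm[OF assms(5), of s] set_A[OF assms(3), of s]
      by (auto simp: asym_def)
    then show "dlt (carry1 x) s = (carry1 x, s, -1)" using assms(6) by (auto simp: d_carry1 asym_def dsym_def)
  qed
  have r5: "reach N (carry1 x, tape_of T', int (length (?pre1 @ ?Dd @ map unm ub0)) - 1) (length ?xs5)
             (carry1 x, tape_of T', int (length ?Sp + 1))"
    by (rule LPk[where pre="?Sp @ [11, 12]" and xs="?xs5" and suf="mkd x # map mkd vb @ 11 # ?Fd @ [14]" and wr="\<lambda>x. x"])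
       (use T T' c5 assms(10) in \<open>auto simp: st_ne\<close>)
  have r6: "reach N (carry1 x, tape_of T', int (length ?Sp + 1)) 1 (carry2 x, tape_of T', int (length ?Sp))"
    by (rule ST[where pre="?Sp @ [11]" and x="12" and s="12" and suf="11 # ?A @ 13 # ?Dd @ map unm ub0 @ mkd x # map mkd vb @ 11 # ?Fd @ [14]"])
       (use T T' assms(6,10) in \<open>auto simp: d_carry1 st_ne\<close>)
  have c7: "\<forall>s\<in>set (map mkd sv @ [11]). dlt (carry2 x) s = (carry2 x, s, -1)"
    using assms(6) by (auto simp: d_carry2 mkd_def)
  have r7: "reach N (carry2 x, tape_of T', int (length ?Sp)) (length sv + 1) (carry2 x, tape_of T', int (length su) - 1)"
    by (rule LPk[where pre="map unm su" and xs="map mkd sv @ [11]" and suf="12 # 11 # ?A @ 13 # ?Dd @ map unm ub0 @ mkd x # map mkd vb @ 11 # ?Fd @ [14]" and wr="\<lambda>x. x"])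
       (use T T' c7 assms(10) in \<open>auto simp: st_ne\<close>)
  note R = reach_trans[OF reach_trans[OF reach_trans[OF reach_trans[OF reach_trans[OF reach_trans[OF r1 r2] r3] r4] r5] r6] r7]
  show ?thesis
    by (rule exI, rule conjI[OF _ R]) (use T in simp)
qed

lemma sub_tail:
  assumes "x < 10" "digs su" "digs sv" "\<forall>r\<in>set ar. recok r" "p \<le> length su + length sv"
    "T = tapeL su sv ar br" "length T \<le> N" "h = int p"
  shows "\<exists>k \<le> length su + length sv + 4 + 3 * length (concat (map rr ar)).
     reach N (ret1 x, tape_of T, h) k (1, tape_of (tapeL su sv (map (procA x) ar) br),
       int (length su + length sv + 4 + length (concat (map rr ar))))"
proof -
  let ?rest = "concat (map rr ar) @ 13 # concat (map rr br) @ [14]"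
  let ?pre = "map unm su @ map mkd sv @ [11, 12, 11]"
  have T: "T = map unm su @ map mkd sv @ [11, 12, 11] @ ?rest" using assms(6) by (simp add: tapeL_def)
  have r1: "reach N (ret1 x, tape_of T, h) (length su + length sv - p + 3) (aseek x, tape_of T, int (length su + length sv + 3))"
    by (rule ret_tail[OF assms(1) T assms(2,3,5,7,8)])
  obtain k where k: "k \<le> 3 * length (concat (map rr ar))"
    "reach N (aseek x, tape_of T, int (length su + length sv + 3)) k
       (aseek x, tape_of (?pre @ concat (map rr (map (procA x) ar)) @ 13 # concat (map rr br) @ [14]),
        int (length ?pre + length (concat (map rr ar))))"
    using A_reg[OF assms(1,4), of ?pre T "13 # concat (map rr br) @ [14]"
        "?pre @ concat (map rr (map (procA x) ar)) @ 13 # concat (map rr br) @ [14]" N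
        "int (length su + length sv + 3)" "int (length ?pre + length (concat (map rr ar)))"]
      T assms(7) by auto
  have lA: "length (concat (map rr (map (procA x) ar))) = length (concat (map rr ar))"
    by (induction ar) auto
  have r3: "reach N (aseek x, tape_of (?pre @ concat (map rr (map (procA x) ar)) @ 13 # concat (map rr br) @ [14]),
        int (length ?pre + length (concat (map rr ar)))) 1
        (1, tape_of (tapeL su sv (map (procA x) ar) br), int (length su + length sv + 4 + length (concat (map rr ar))))"
    by (rule ST[where pre="?pre @ concat (map rr (map (procA x) ar))" and x=13 and s=13 and suf="concat (map rr br) @ [14]"])
       (use assms(1,7) T lA in \<open>auto simp: tapeL_def d_aseek st_ne\<close>)
  show ?thesis
    by (rule exI, rule conjI[OF _ reach_trans[OF reach_trans[OF r1 k(2)] r3]]) (use k(1) assms(5) in simp)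
qed

lemma val_tail_lt: "digs sv \<Longrightarrow> val (y # sv) < (y + 1) * 10 ^ length sv"
  using val_lt[of sv] by (simp add: val_Cons digs_def)

lemma round_sub:
  assumes "digs su" "digs sv" "\<forall>r\<in>set ar. recok r" "x < 10"
    "T = tapeL su sv ar br" "length T \<le> N" "h = int (length su) - 1"
  shows "\<exists>k \<le> 5 * length T. \<exists>c. reach N (carry2 x, tape_of T, h) k c \<and>
    ((fst c = 12 \<and> (su = [] \<or> val (su @ sv) < x * 10 ^ length sv)) \<or>
     (\<exists>su' sv'. c = (1, tape_of (tapeL su' sv' (map (procA x) ar) br),
                   int (length su + length sv + 4 + length (concat (map rr ar)))) \<and>
        digs su' \<and> digs sv' \<and> length su' + length sv' = length su + length sv \<and>
        length sv' = length sv + 1 \<and> val (su' @ sv') + x * 10 ^ length sv = val (su @ sv)))"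
proof (cases su rule: rev_exhaust)
  case Nil
  have "reach N (carry2 x, tape_of T, h) 1 (12, tape_of T, -1)"
    by (rule ST_blank) (use Nil assms(4,7) in \<open>auto simp: d_carry2 st_ne\<close>)
  then show ?thesis using Nil
    by (intro exI[of _ 1] conjI exI[of _ "(12, tape_of T, -1)"]) (auto simp: assms(5) tapeL_def)
next
  case (snoc su0 y)
  have y: "y < 10" and d0: "digs su0" using assms(1) snoc by (auto simp: digs_def)
  let ?rest = "[11, 12, 11] @ concat (map rr ar) @ 13 # concat (map rr br) @ [14]"
  have T: "T = map unm su0 @ unm y # map mkd sv @ ?rest" using assms(5) snoc by (simp add: tapeL_def)
  have LT: "length T = length su + length sv + 3 + length (concat (map rr ar)) + 1 + length (concat (map rr br)) + 1"
    using assms(5) by (simp add: tapeL_def)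
  show ?thesis
  proof (cases "x \<le> y")
    case True
    let ?T1 = "tapeL su0 ((y - x) # sv) ar br"
    have r1: "reach N (carry2 x, tape_of T, h) 1 (ret1 x, tape_of ?T1, int (length su0 + 1))"
      by (rule ST[where pre="map unm su0" and x="unm y" and s="mkd (y - x)" and suf="map mkd sv @ ?rest"])
         (use T True y assms(4,6,7) snoc in \<open>auto simp: d_carry2 st_ne unm_def mkd_def tapeL_def\<close>)
    have ds: "digs ((y - x) # sv)" using assms(2) y by (simp add: digs_def)
    obtain k where k: "k \<le> length su0 + length ((y - x) # sv) + 4 + 3 * length (concat (map rr ar))"
      "reach N (ret1 x, tape_of ?T1, int (length su0 + 1)) k
         (1, tape_of (tapeL su0 ((y - x) # sv) (map (procA x) ar) br),
            int (length su0 + length ((y - x) # sv) + 4 + length (concat (map rr ar))))"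
      using sub_tail[OF assms(4) d0 ds assms(3), of "length su0 + 1" ?T1 br N "int (length su0 + 1)"] assms(6) T
      by (auto simp: tapeL_def)
    have V0: "val (su0 @ (y - x) # sv) = val su0 * 10 ^ (length sv + 1) + (y - x) * 10 ^ length sv + val sv"
      by (simp add: val_append val_Cons)
    have V1: "val (su @ sv) = val su0 * 10 ^ (length sv + 1) + y * 10 ^ length sv + val sv"
      using snoc by (simp add: val_append val_Cons)
    have V2: "(y - x) * 10 ^ length sv + x * 10 ^ length sv = y * 10 ^ length sv"
      by (metis True le_add_diff_inverse2 add_mult_distrib)
    have V: "val (su0 @ (y - x) # sv) + x * 10 ^ length sv = val (su @ sv)"
      using V0 V1 V2 by linarith
    have R: "reach N (carry2 x, tape_of T, h) (1 + k) (1, tape_of (tapeL su0 ((y - x) # sv) (map (procA x) ar) br),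
            int (length su + length sv + 4 + length (concat (map rr ar))))"
      using reach_trans[OF r1 k(2)] snoc by simp
    have K: "1 + k \<le> 5 * length T" using k(1) LT snoc by simp
    show ?thesis
      apply (rule exI[of _ "1 + k"], rule conjI[OF K])
      apply (rule exI, rule conjI[OF R])
      apply (rule disjI2)
      apply (rule exI[of _ su0], rule exI[of _ "(y - x) # sv"])
      using V d0 ds snoc by simp
  next
    case False
    let ?z = "y + 10 - x"
    have r1: "reach N (carry2 x, tape_of T, h) 1 (borrow x, tape_of (map unm su0 @ mkd ?z # map mkd sv @ ?rest), int (length su0) - 1)"
      by (rule ST[where pre="map unm su0" and x="unm y" and s="mkd ?z" and suf="map mkd sv @ ?rest"])
         (use T False y assms(4,6,7) snoc in \<open>auto simp: d_carry2 st_ne unm_def mkd_def\<close>)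
    have ds: "digs (?z # sv)" using assms(2) y False by (simp add: digs_def)
    have B: "(val su0 = 0 \<and> (\<exists>k \<le> length su0 + 1. \<exists>c. reach N (borrow x, tape_of (map unm su0 @ mkd ?z # map mkd sv @ ?rest), int (length su0) - 1) k c \<and> fst c = 12)) \<or>
         (val su0 > 0 \<and> (\<exists>ys zs k. k \<le> length su0 \<and> digs (ys @ zs) \<and> length (ys @ zs) = length su0 \<and>
             val (ys @ zs) = val su0 - 1 \<and>
             reach N (borrow x, tape_of (map unm su0 @ mkd ?z # map mkd sv @ ?rest), int (length su0) - 1) k
               (ret1 x, tape_of (map unm (ys @ zs) @ mkd ?z # map mkd sv @ ?rest), int (length ys))))"
      by (rule borrow_lem[OF assms(4) d0]) (use assms(6) T in auto)
    then show ?thesis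
    proof
      assume a: "val su0 = 0 \<and> (\<exists>k \<le> length su0 + 1. \<exists>c. reach N (borrow x, tape_of (map unm su0 @ mkd ?z # map mkd sv @ ?rest), int (length su0) - 1) k c \<and> fst c = 12)"
      then obtain k c where kc: "k \<le> length su0 + 1" "reach N (borrow x, tape_of (map unm su0 @ mkd ?z # map mkd sv @ ?rest), int (length su0) - 1) k c" "fst c = 12"
        by blast
      have "val (su @ sv) < x * 10 ^ length sv"
      proof -
        have "val (su @ sv) = val (y # sv)" using a snoc by (simp add: val_append val_Cons)
        also have "\<dots> < (y + 1) * 10 ^ length sv" by (rule val_tail_lt[OF assms(2)])
        also have "\<dots> \<le> x * 10 ^ length sv" using False by (intro mult_le_mono1) simp
        finally show ?thesis .
      qed
      moreover have "reach N (carry2 x, tape_of T, h) (1 + k) c" using reach_trans[OF r1 kc(2)] .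
      moreover have "1 + k \<le> 5 * length T" using kc(1) LT snoc by simp
      ultimately show ?thesis using kc(3) by blast
    next
      assume a: "val su0 > 0 \<and> (\<exists>ys zs k. k \<le> length su0 \<and> digs (ys @ zs) \<and> length (ys @ zs) = length su0 \<and>
             val (ys @ zs) = val su0 - 1 \<and>
             reach N (borrow x, tape_of (map unm su0 @ mkd ?z # map mkd sv @ ?rest), int (length su0) - 1) k
               (ret1 x, tape_of (map unm (ys @ zs) @ mkd ?z # map mkd sv @ ?rest), int (length ys)))"
      then obtain ys zs k where yz: "k \<le> length su0" "digs (ys @ zs)" "length (ys @ zs) = length su0"
             "val (ys @ zs) = val su0 - 1"
             "reach N (borrow x, tape_of (map unm su0 @ mkd ?z # map mkd sv @ ?rest), int (length su0) - 1) k
               (ret1 x, tape_of (map unm (ys @ zs) @ mkd ?z # map mkd sv @ ?rest), int (length ys))"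
        by blast
      have p: "val su0 > 0" using a by simp
      let ?T1 = "tapeL (ys @ zs) (?z # sv) ar br"
      have T1: "map unm (ys @ zs) @ mkd ?z # map mkd sv @ ?rest = ?T1" by (simp add: tapeL_def)
      obtain k2 where k2: "k2 \<le> length (ys @ zs) + length (?z # sv) + 4 + 3 * length (concat (map rr ar))"
        "reach N (ret1 x, tape_of ?T1, int (length ys)) k2
           (1, tape_of (tapeL (ys @ zs) (?z # sv) (map (procA x) ar) br),
              int (length (ys @ zs) + length (?z # sv) + 4 + length (concat (map rr ar))))"
        using sub_tail[OF assms(4) yz(2) ds assms(3), of "length ys" ?T1 br N "int (length ys)"] assms(6) T yz(3)
        by (auto simp: tapeL_def)
      have V: "val ((ys @ zs) @ ?z # sv) + x * 10 ^ length sv = val (su @ sv)"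
      proof -
        have "val ((ys @ zs) @ ?z # sv) + x * 10 ^ length sv
              = (val su0 - 1) * 10 ^ (length sv + 1) + (y + 10 - x) * 10 ^ length sv + val sv + x * 10 ^ length sv"
        proof -
          have "val ((ys @ zs) @ ?z # sv) = val (ys @ zs) * 10 ^ (length sv + 1) + ?z * 10 ^ length sv + val sv"
            using val_append[of "ys @ zs" "?z # sv"] val_Cons[of ?z sv] by simp
          then show ?thesis using yz(4) by simp
        qed
        also have "\<dots> = (val su0 - 1) * 10 ^ (length sv + 1) + 10 ^ (length sv + 1) + y * 10 ^ length sv + val sv"
        proof -
          have xl: "x \<le> y + 10" using assms(4) by simp
          have "(y + 10 - x) * 10 ^ length sv + x * 10 ^ length sv = (y + 10) * 10 ^ length sv"
            by (metis xl le_add_diff_inverse2 add_mult_distrib)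
          then show ?thesis by (simp add: algebra_simps)
        qed
        also have "\<dots> = val su0 * 10 ^ (length sv + 1) + y * 10 ^ length sv + val sv"
          using p by (cases "val su0") (simp_all add: algebra_simps)
        also have "\<dots> = val (su @ sv)" using snoc by (simp add: val_append val_Cons algebra_simps)
        finally show ?thesis .
      qed
      have R: "reach N (carry2 x, tape_of T, h) (1 + (k + k2)) (1, tape_of (tapeL (ys @ zs) (?z # sv) (map (procA x) ar) br),
            int (length su + length sv + 4 + length (concat (map rr ar))))"
      proof -
        have E: "int (length (ys @ zs) + length (?z # sv) + 4 + length (concat (map rr ar))) =
                 int (length su + length sv + 4 + length (concat (map rr ar)))" using yz(3) snoc by simp
        show ?thesis using reach_trans[OF r1 reach_trans[OF yz(5)[unfolded T1] k2(2)]] unfolding E .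
      qed
      have K: "1 + (k + k2) \<le> 5 * length T" using k2(1) yz(1,3) LT snoc by simp
      show ?thesis
        apply (rule exI[of _ "1 + (k + k2)"], rule conjI[OF K])
        apply (rule exI, rule conjI[OF R])
        apply (rule disjI2)
        apply (rule exI[of _ "ys @ zs"], rule exI[of _ "?z # sv"])
        using V yz(2,3) ds snoc by simp
    qed
  qed
qed

definition unmk :: "nat \<Rightarrow> nat" where
  "unmk s = (if 15 \<le> s \<and> s \<le> 24 then s - 14 else s)"

lemma finalize:
  assumes "digs su" "digs sv" "\<forall>r\<in>set ar. recok r" "\<forall>r\<in>set D. drec r" "digs vb"
    "T = tapeL su sv ar (D @ [([], vb, 11)] @ F)" "length T \<le> N"
    "h = int (length su + length sv + 4 + length (concat (map rr ar)))"
  shows "\<exists>k \<le> 10 * length T. \<exists>c. reach N (1, tape_of T, h) k c \<and>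
    (if fst (selL False ar) then c = (1, tape_of (tapeL (su @ sv) [] (snd (selL False ar)) (D @ [([], vb, 27)] @ F)), h)
     else fst c = 12)"
proof -
  let ?Sp = "map unm su @ map mkd sv"
  let ?A = "concat (map rr ar)"
  let ?Dd = "concat (map rr D)"
  let ?Fd = "concat (map rr F)"
  let ?pre1 = "?Sp @ [11, 12, 11] @ ?A @ [13]"
  let ?xs1 = "?Dd @ map mkd vb"
  have T: "T = ?pre1 @ ?xs1 @ 11 # ?Fd @ [14]" using assms(6) by (simp add: tapeL_def)
  have LT: "length T = length su + length sv + length ?A + length ?Dd + length vb + length ?Fd + 6"
    using T by simp
  have c1: "\<forall>s\<in>set ?xs1. dlt 1 s = (1, s, 1)"
  proof
    fix s assume s: "s \<in> set ?xs1"
    have "dsym s \<or> (15 \<le> s \<and> s \<le> 24)"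
      using s set_D[OF assms(4), of s] set_mkd[OF assms(5), of s] by auto
    then show "dlt 1 s = (1, s, 1)" by (auto simp: d_small dA_def dsym_def)
  qed
  have r1: "reach N (1, tape_of T, h) (length ?xs1) (1, tape_of T, int (length ?pre1 + length ?xs1))"
    by (rule RPk[where pre="?pre1" and xs="?xs1" and suf="11 # ?Fd @ [14]" and wr="\<lambda>x. x"])
       (use T c1 assms(7,8) in auto)
  have r2: "reach N (1, tape_of T, int (length ?pre1 + length ?xs1)) 1 (2, tape_of T, int (length ?pre1 + length ?xs1) - 1)"
    by (rule ST[where pre="?pre1 @ ?xs1" and x=11 and s=11 and suf="?Fd @ [14]"])
       (use T assms(7) in \<open>auto simp: d_small dA_def\<close>)
  have c3: "\<forall>s\<in>set (map mkd vb). dlt 2 s = (2, s, -1)"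
    using set_mkd[OF assms(5)] by (auto simp: d_small dA_def)
  have r3: "reach N (2, tape_of T, int (length ?pre1 + length ?xs1) - 1) (length vb)
             (2, tape_of T, int (length (?pre1 @ ?Dd)) - 1)"
    by (rule LPk[where pre="?pre1 @ ?Dd" and xs="map mkd vb" and suf="11 # ?Fd @ [14]" and wr="\<lambda>x. x"])
       (use T c3 assms(7) in auto)
  obtain p0 l where pl: "?pre1 @ ?Dd = p0 @ [l]" and l: "l = 13 \<or> l = 27"
  proof (cases D rule: rev_exhaust)
    case Nil
    then show ?thesis using that[of "?Sp @ [11, 12, 11] @ ?A" 13] by simp
  next
    case (snoc D0 r)
    have "drec r" using assms(4) snoc by simp
    then obtain v where "r = ([], v, 27)" by (cases r) (auto simp: drec_def)
    then show ?thesis using that[of "?pre1 @ concat (map rr D0) @ map mkd v" 27] snoc by simp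
  qed
  have lp: "length p0 = length su + length sv + length ?A + length ?Dd + 3"
    using arg_cong[OF pl, of length] by simp
  have r4: "reach N (2, tape_of T, int (length (?pre1 @ ?Dd)) - 1) 1 (3, tape_of T, int (length (?pre1 @ ?Dd)))"
    by (rule ST[where pre="p0" and x=l and s=l and suf="map mkd vb @ 11 # ?Fd @ [14]"])
       (use T pl l assms(7) lp in \<open>auto simp: d_small dA_def\<close>)
  have c5: "\<forall>s\<in>set (map mkd vb). dlt 3 s = (3, s, 1)"
    by (auto simp: d_small dA_def mkd_def)
  have r5: "reach N (3, tape_of T, int (length (?pre1 @ ?Dd))) (length vb) (3, tape_of T, int (length ?pre1 + length ?xs1))"
    by (rule RPk[where pre="?pre1 @ ?Dd" and xs="map mkd vb" and suf="11 # ?Fd @ [14]" and wr="\<lambda>x. x"])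
       (use T c5 assms(7) in auto)
  let ?D' = "D @ [([], vb, 27)]"
  let ?T6 = "?pre1 @ ?xs1 @ 27 # ?Fd @ [14]"
  have r6: "reach N (3, tape_of T, int (length ?pre1 + length ?xs1)) 1 (4, tape_of ?T6, int (length ?pre1 + length ?xs1) - 1)"
    by (rule ST[where pre="?pre1 @ ?xs1" and x=11 and s=27 and suf="?Fd @ [14]"])
       (use T assms(7) in \<open>auto simp: d_small dA_def\<close>)
  let ?xs7 = "[11] @ ?A @ [13] @ ?xs1"
  have c7: "\<forall>s\<in>set ?xs7. dlt 4 s = (4, s, -1)"
  proof
    fix s assume s: "s \<in> set ?xs7"
    have "asym s \<or> dsym s \<or> s = 13"
      using s set_D[OF assms(4), of s] set_mkd[OF assms(5), of s] set_A[OF assms(3), of s]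
      by (auto simp: asym_def dsym_def)
    then show "dlt 4 s = (4, s, -1)" by (auto simp: d_small dA_def asym_def dsym_def)
  qed
  have r7: "reach N (4, tape_of ?T6, int (length ?pre1 + length ?xs1) - 1) (length ?xs7) (4, tape_of ?T6, int (length ?Sp + 1))"
    by (rule LPk[where pre="?Sp @ [11, 12]" and xs="?xs7" and suf="27 # ?Fd @ [14]" and wr="\<lambda>x. x"])
       (use T c7 assms(7) in auto)
  have r8: "reach N (4, tape_of ?T6, int (length ?Sp + 1)) 1 (5, tape_of ?T6, int (length ?Sp))"
    by (rule ST[where pre="?Sp @ [11]" and x=12 and s=12 and suf="?xs7 @ 27 # ?Fd @ [14]"])
       (use T assms(7) in \<open>auto simp: d_small dA_def\<close>)
  let ?rest = "12 # ?xs7 @ 27 # ?Fd @ [14]"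
  let ?T9 = "map unm (su @ sv) @ [11] @ ?rest"
  have c9: "\<forall>s\<in>set (?Sp @ [11]). dlt 5 s = (5, unmk s, -1)"
    using assms(1) by (auto simp: d_small dA_def unmk_def unm_def mkd_def digs_def)
  have w9: "map unmk (?Sp @ [11]) = map unm (su @ sv) @ [11]"
    using assms(1,2) by (auto simp: unmk_def unm_def mkd_def digs_def)
  have r9: "reach N (5, tape_of ?T6, int (length ?Sp)) (length (?Sp @ [11])) (5, tape_of ?T9, -1)"
    by (rule LPk[where pre="[]" and xs="?Sp @ [11]" and suf="?rest" and wr=unmk])
       (use T c9 w9 assms(7) in auto)
  have r10: "reach N (5, tape_of ?T9, -1) 1 (6, tape_of ?T9, 0)"
    by (rule ST_blank) (auto simp: d_small dA_def)
  have c11: "\<forall>s\<in>set (map unm (su @ sv) @ [11]). dlt 6 s = (6, s, 1)"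
    using assms(1,2) by (auto simp: d_small dA_def digs_def unm_def)
  have r11: "reach N (6, tape_of ?T9, 0) (length (?Sp @ [11])) (6, tape_of ?T9, int (length ?Sp + 1))"
    by (rule RPk[where pre="[]" and xs="map unm (su @ sv) @ [11]" and suf="?rest" and wr="\<lambda>x. x"])
       (use T c11 assms(7) in auto)
  have r12: "reach N (6, tape_of ?T9, int (length ?Sp + 1)) 1 (7, tape_of ?T9, int (length ?Sp + 2))"
    by (rule ST[where pre="map unm (su @ sv) @ [11]" and x=12 and s=12 and suf="?xs7 @ 27 # ?Fd @ [14]"])
       (use T assms(7) in \<open>auto simp: d_small dA_def\<close>)
  have r13: "reach N (7, tape_of ?T9, int (length ?Sp + 2)) 1 (selA False True, tape_of ?T9, int (length ?Sp + 3))"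
    by (rule ST[where pre="map unm (su @ sv) @ [11, 12]" and x=11 and s=11 and suf="?A @ [13] @ ?xs1 @ 27 # ?Fd @ [14]"])
       (use T assms(7) in \<open>auto simp: d_small dA_def selA_def\<close>)
  let ?f = "fst (selL False ar)"
  let ?ar' = "snd (selL False ar)"
  let ?pre14 = "map unm (su @ sv) @ [11, 12, 11]"
  let ?T14 = "?pre14 @ concat (map rr ?ar') @ [13] @ ?xs1 @ 27 # ?Fd @ [14]"
  have r14: "reach N (selA False True, tape_of ?T9, int (length ?Sp + 3)) (length ?A)
               (selA ?f True, tape_of ?T14, int (length ?Sp + 3 + length ?A))"
    by (rule sel_reg[OF assms(3), where pre="?pre14" and suf="[13] @ ?xs1 @ 27 # ?Fd @ [14]"])
       (use T assms(7) in auto)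
  have lA: "length (concat (map rr ?ar')) = length ?A"
  proof -
    have "\<And>f. length (concat (map rr (snd (selL f rs)))) = length (concat (map rr rs))" for rs
      by (induction rs) (auto simp del: selR.simps)
    then show ?thesis by blast
  qed
  note R = reach_trans[OF reach_trans[OF reach_trans[OF reach_trans[OF reach_trans[OF reach_trans[OF reach_trans[OF
     reach_trans[OF reach_trans[OF reach_trans[OF reach_trans[OF reach_trans[OF reach_trans[OF r1 r2] r3] r4] r5] r6] r7] r8] r9]
     r10] r11] r12] r13] r14]
  let ?K = "length ?xs1 + 1 + length vb + 1 + length vb + 1 + length ?xs7 + 1 + length (?Sp @ [11]) + 1 +
      length (?Sp @ [11]) + 1 + 1 + length ?A"
  have K: "?K + 1 \<le> 10 * length T" using LT by simp
  show ?thesis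
  proof (cases ?f)
    case True
    have r15: "reach N (selA ?f True, tape_of ?T14, int (length ?Sp + 3 + length ?A)) 1
                (1, tape_of (tapeL (su @ sv) [] ?ar' (D @ [([], vb, 27)] @ F)), h)"
      by (rule ST[where pre="?pre14 @ concat (map rr ?ar')" and x=13 and s=13 and suf="?xs1 @ 27 # ?Fd @ [14]"])
         (use T True assms(7,8) lA in \<open>auto simp: d_sel dS_def st_ne tapeL_def\<close>)
    show ?thesis using True reach_trans[OF R r15] K by (intro exI[of _ "?K + 1"]) auto
  next
    case False
    have r15: "reach N (selA ?f True, tape_of ?T14, int (length ?Sp + 3 + length ?A)) 1
                (12, tape_of ?T14, int (length ?Sp + 3 + length ?A))"
      by (rule ST[where pre="?pre14 @ concat (map rr ?ar')" and x=13 and s=13 and suf="?xs1 @ 27 # ?Fd @ [14]"])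
         (use T False assms(7,8) lA in \<open>auto simp: d_sel dS_def st_ne\<close>)
    show ?thesis using False reach_trans[OF R r15] K by (intro exI[of _ "?K + 1"]) auto
  qed
qed

lemma final_lem:
  assumes "digs su" "\<forall>r\<in>set ar. recok r" "\<forall>r\<in>set D. drec r"
    "T = tapeL su [] ar D" "length T \<le> N" "h = int (length su + 4 + length (concat (map rr ar)))"
  shows "\<exists>k \<le> 3 * length T. \<exists>c. reach N (1, tape_of T, h) k c \<and> (fst c = 11 \<or> fst c = 12) \<and> (fst c = 11 \<longleftrightarrow> val su = 0)"
proof -
  let ?Sp = "map unm su"
  let ?A = "concat (map rr ar)"
  let ?Dd = "concat (map rr D)"
  let ?pre1 = "?Sp @ [11, 12, 11] @ ?A @ [13]"
  have T: "T = ?pre1 @ ?Dd @ [14]" using assms(4) by (simp add: tapeL_def)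
  have c1: "\<forall>s\<in>set ?Dd. dlt 1 s = (1, s, 1)"
  proof
    fix s assume "s \<in> set ?Dd"
    then have "dsym s" using set_D[OF assms(3)] by blast
    then show "dlt 1 s = (1, s, 1)" by (auto simp: d_small dA_def dsym_def)
  qed
  have r1: "reach N (1, tape_of T, h) (length ?Dd) (1, tape_of T, int (length ?pre1 + length ?Dd))"
    by (rule RPk[where pre="?pre1" and xs="?Dd" and suf="[14]" and wr="\<lambda>x. x"])
       (use T c1 assms(5,6) in auto)
  have r2: "reach N (1, tape_of T, int (length ?pre1 + length ?Dd)) 1 (8, tape_of T, int (length ?pre1 + length ?Dd) - 1)"
    by (rule ST[where pre="?pre1 @ ?Dd" and x=14 and s=14 and suf="[]"])
       (use T assms(5) in \<open>auto simp: d_small dA_def\<close>)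
  let ?xs3 = "[11] @ ?A @ [13] @ ?Dd"
  have c3: "\<forall>s\<in>set ?xs3. dlt 8 s = (8, s, -1)"
  proof
    fix s assume s: "s \<in> set ?xs3"
    have "asym s \<or> dsym s \<or> s = 13"
      using s set_D[OF assms(3), of s] set_A[OF assms(2), of s] by (auto simp: asym_def)
    then show "dlt 8 s = (8, s, -1)" by (auto simp: d_small dA_def asym_def dsym_def)
  qed
  have r3: "reach N (8, tape_of T, int (length ?pre1 + length ?Dd) - 1) (length ?xs3) (8, tape_of T, int (length ?Sp + 1))"
    by (rule LPk[where pre="?Sp @ [11, 12]" and xs="?xs3" and suf="[14]" and wr="\<lambda>x. x"])
       (use T c3 assms(5) in auto)
  have r4: "reach N (8, tape_of T, int (length ?Sp + 1)) 1 (9, tape_of T, int (length ?Sp))"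
    by (rule ST[where pre="?Sp @ [11]" and x=12 and s=12 and suf="?xs3 @ [14]"])
       (use T assms(5) in \<open>auto simp: d_small dA_def\<close>)
  have r5: "reach N (9, tape_of T, int (length ?Sp)) 1 (10, tape_of T, int (length su) - 1)"
    by (rule ST[where pre="?Sp" and x=11 and s=11 and suf="12 # ?xs3 @ [14]"])
       (use T assms(5) in \<open>auto simp: d_small dA_def\<close>)
  obtain k c where kc: "k \<le> length su + 1" "reach N (10, tape_of T, int (length su) - 1) k c"
    "fst c = 11 \<or> fst c = 12" "fst c = 11 \<longleftrightarrow> val su = 0"
    using fin3_lem[OF assms(1), of T "[11, 12] @ ?xs3 @ [14]" N "int (length su) - 1"] T assms(5) by auto
  note R = reach_trans[OF reach_trans[OF reach_trans[OF reach_trans[OF reach_trans[OF r1 r2] r3] r4] r5] kc(2)]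
  have K: "length ?Dd + 1 + length ?xs3 + 1 + 1 + k \<le> 3 * length T" using kc(1) T by simp
  show ?thesis
    apply (rule exI[of _ "length ?Dd + 1 + length ?xs3 + 1 + 1 + k"])
    apply (rule conjI[OF K])
    apply (rule exI[of _ c])
    using R kc(3,4) by simp
qed

lemma init_lem:
  assumes "digs su" "\<forall>r\<in>set ar. recok r" "T = tapeL su [] ar br" "length T \<le> N"
  shows "reach N (0, tape_of T, 0) (length su + 4 + length (concat (map rr ar)))
           (1, tape_of T, int (length su + 4 + length (concat (map rr ar))))"
proof -
  let ?xs = "map unm su @ [11, 12, 11] @ concat (map rr ar)"
  have T: "T = [] @ ?xs @ 13 # concat (map rr br) @ [14]" using assms(3) by (simp add: tapeL_def)
  have c: "\<forall>s\<in>set ?xs. dlt 0 s = (0, s, 1)"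
  proof
    fix s assume s: "s \<in> set ?xs"
    have "asym s \<or> (1 \<le> s \<and> s \<le> 10) \<or> s = 12"
      using s set_A[OF assms(2), of s] set_unm[OF assms(1), of s] by (auto simp: asym_def)
    then show "dlt 0 s = (0, s, 1)" by (auto simp: d_small dA_def asym_def)
  qed
  have r1: "reach N (0, tape_of T, 0) (length ?xs) (0, tape_of T, int (length ?xs))"
    by (rule RPk[where pre="[]" and xs="?xs" and suf="13 # concat (map rr br) @ [14]" and wr="\<lambda>x. x"])
       (use T c assms(4) in auto)
  have r2: "reach N (0, tape_of T, int (length ?xs)) 1 (1, tape_of T, int (length ?xs) + 1)"
    by (rule ST[where pre="?xs" and x=13 and s=13 and suf="concat (map rr br) @ [14]"])
       (use T assms(4) in \<open>auto simp: d_small dA_def\<close>)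
  have R: "reach N (0, tape_of T, 0) (length ?xs + 1) (1, tape_of T, int (length su + 4 + length (concat (map rr ar))))"
  proof -
    have E: "int (length ?xs) + 1 = int (length su + 4 + length (concat (map rr ar)))" by simp
    show ?thesis using reach_trans[OF r1 r2] unfolding E .
  qed
  show ?thesis by (rule reach_eqk[OF R]) simp
qed

abbreviation dd :: "nat \<Rightarrow> nat list" where "dd \<equiv> decimal_digits"

definition sfx :: "nat list \<Rightarrow> nat list \<Rightarrow> bool" where
  "sfx vb xs \<longleftrightarrow> (\<exists>zs. xs = zs @ vb)"

definition arok :: "nat list \<Rightarrow> nat list \<Rightarrow> (nat \<Rightarrow> nat) \<Rightarrow> nat \<Rightarrow> nat \<Rightarrow> rec \<Rightarrow> bool" where
  "arok as vb f j i r \<longleftrightarrow> (case r of (u, v, st) \<Rightarrow> u @ v = dd (as ! i) \<and> (st = 11 \<or> st = 25 \<or> st = 26) \<and>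
       (st = 26 \<longleftrightarrow> i \<in> f ` {..<j}) \<and> (st = 11 \<longrightarrow> v = vb) \<and> (st = 25 \<longrightarrow> \<not> sfx vb (dd (as ! i))))"

definition INV :: "nat \<Rightarrow> nat list \<Rightarrow> nat list \<Rightarrow> nat list \<Rightarrow> nat list \<Rightarrow> rec list \<Rightarrow> nat \<Rightarrow> nat list \<Rightarrow> nat list \<Rightarrow> (nat \<Rightarrow> nat) \<Rightarrow> bool" where
  "INV S as bs su sv ar j ub vb f \<longleftrightarrow>
     j \<le> length bs \<and> (j < length bs \<longrightarrow> ub @ vb = dd (bs ! j)) \<and> (j = length bs \<longrightarrow> ub = [] \<and> vb = []) \<and>
     digs su \<and> digs sv \<and> length su + length sv = length (dd S) \<and> length sv = length vb \<and>
     val (su @ sv) + sum_list (take j bs) + val vb = S \<and>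
     length ar = length as \<and> (\<forall>i < length as. arok as vb f j i (ar ! i)) \<and>
     inj_on f {..<j} \<and> (\<forall>i<j. f i < length as \<and> as ! (f i) = bs ! i)"

definition brecs :: "nat list \<Rightarrow> nat \<Rightarrow> nat list \<Rightarrow> nat list \<Rightarrow> rec list" where
  "brecs bs j ub vb = map (\<lambda>b. ([], dd b, 27)) (take j bs) @
     (if j < length bs then [(ub, vb, 11)] @ map (\<lambda>b. (dd b, [], 11)) (drop (Suc j) bs) else [])"

definition RSc :: "nat list \<Rightarrow> nat list \<Rightarrow> nat list \<Rightarrow> rec list \<Rightarrow> nat \<Rightarrow> nat list \<Rightarrow> nat list \<Rightarrow> config" where
  "RSc bs su sv ar j ub vb = (1, tape_of (tapeL su sv ar (brecs bs j ub vb)),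
      int (length su + length sv + 4 + length (concat (map rr ar))))"

definition mu :: "nat list \<Rightarrow> nat \<Rightarrow> nat list \<Rightarrow> nat" where
  "mu bs j ub = (if j < length bs then length ub + 1 + sum_list (map (\<lambda>b. length (dd b) + 1) (drop (Suc j) bs)) else 0)"

lemma len_concat_rr: "length (concat (map rr rs)) = sum_list (map (\<lambda>r. length (fst r) + length (fst (snd r)) + 1) rs)"
  by (induction rs) auto

lemma sum_list_cong_nth:
  assumes "length xs = length ys" "\<forall>i<length xs. g (xs ! i) = h (ys ! i)"
  shows "sum_list (map g xs) = sum_list (map h ys)"
proof -
  have "map g xs = map h ys" using assms by (intro nth_equalityI) auto
  then show ?thesis by simp
qed

lemma ss_input_tapeL: "ss_input S as bs = tapeL (dd S) [] (map (\<lambda>a. (dd a, [], 11)) as) (map (\<lambda>b. (dd b, [], 11)) bs)"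
  by (simp add: ss_input_def tapeL_def enc_num_unm us_sym_def at_sym_def hash_sym_def semi_sym_def comp_def)

lemma len_ar:
  assumes "length ar = length as" "\<forall>i < length as. arok as vb f j i (ar ! i)"
  shows "length (concat (map rr ar)) = length (concat (map rr (map (\<lambda>a. (dd a, [], 11)) as)))"
  unfolding len_concat_rr
proof (rule sum_list_cong_nth)
  show "length ar = length (map (\<lambda>a. (dd a, [], 11::nat)) as)" using assms by simp
  show "\<forall>i<length ar. length (fst (ar ! i)) + length (fst (snd (ar ! i))) + 1 =
     length (fst (map (\<lambda>a. (dd a, [], 11::nat)) as ! i)) + length (fst (snd (map (\<lambda>a. (dd a, [], 11::nat)) as ! i))) + 1"
  proof (intro allI impI)
    fix i assume i: "i < length ar"
    obtain u v st where e: "ar ! i = (u, v, st)" by (cases "ar ! i") auto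
    have "u @ v = dd (as ! i)" using assms i e by (auto simp: arok_def)
    then have "length u + length v = length (dd (as ! i))" by (metis length_append)
    then show "length (fst (ar ! i)) + length (fst (snd (ar ! i))) + 1 =
     length (fst (map (\<lambda>a. (dd a, [], 11::nat)) as ! i)) + length (fst (snd (map (\<lambda>a. (dd a, [], 11::nat)) as ! i))) + 1"
      using e i assms(1) by simp
  qed
qed

lemma len_brecs:
  assumes "j \<le> length bs" "j < length bs \<longrightarrow> ub @ vb = dd (bs ! j)" "j = length bs \<longrightarrow> ub = [] \<and> vb = []"
  shows "length (concat (map rr (brecs bs j ub vb))) = length (concat (map rr (map (\<lambda>b. (dd b, [], 11)) bs)))"
proof (cases "j < length bs")
  case True
  have bs: "bs = take j bs @ [bs ! j] @ drop (Suc j) bs" using True by (simp add: id_take_nth_drop)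
  have "length (ub @ vb) = length (dd (bs ! j))" using assms(2) True by simp
  then show ?thesis using True unfolding brecs_def len_concat_rr
    by (subst (2) bs) (simp add: comp_def)
next
  case False
  then have "j = length bs" using assms(1) by simp
  then show ?thesis unfolding brecs_def len_concat_rr by (simp add: comp_def)
qed

lemma len_tape:
  assumes "INV S as bs su sv ar j ub vb f"
  shows "length (tapeL su sv ar (brecs bs j ub vb)) = length (ss_input S as bs)"
proof -
  have a: "length ar = length as" "\<forall>i < length as. arok as vb f j i (ar ! i)"
    "j \<le> length bs" "j < length bs \<longrightarrow> ub @ vb = dd (bs ! j)" "j = length bs \<longrightarrow> ub = [] \<and> vb = []"
    "length su + length sv = length (dd S)"
    using assms by (auto simp: INV_def)
  show ?thesis using len_ar[OF a(1,2)] len_brecs[OF a(3,4,5)] a(6)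
    unfolding ss_input_tapeL by (simp add: tapeL_def)
qed

definition Pf :: "rec \<Rightarrow> bool" where "Pf r \<longleftrightarrow> snd (snd r) = 11 \<and> fst r = []"

lemma selR_fst: "fst (selR f r) = (f \<or> Pf r)"
  by (cases r) (auto simp: Pf_def)

lemma selR_snd: "snd (selR f r) = (fst r @ fst (snd r), [], if snd (snd r) = 26 \<or> (\<not> f \<and> Pf r) then 26 else 11)"
  by (cases r) (auto simp: Pf_def)

lemma selL_spec:
  "length (snd (selL f rs)) = length rs \<and>
   (\<forall>i<length rs. snd (selL f rs) ! i = (fst (rs ! i) @ fst (snd (rs ! i)), [],
       if snd (snd (rs ! i)) = 26 \<or> (\<not> f \<and> Pf (rs ! i) \<and> (\<forall>i'<i. \<not> Pf (rs ! i'))) then 26 else 11)) \<and>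
   (fst (selL f rs) \<longleftrightarrow> f \<or> (\<exists>i<length rs. Pf (rs ! i)))"
proof (induction rs arbitrary: f)
  case Nil
  then show ?case by simp
next
  case (Cons r rs)
  let ?f' = "fst (selR f r)"
  have IH: "length (snd (selL ?f' rs)) = length rs"
    "\<And>i. i < length rs \<Longrightarrow> snd (selL ?f' rs) ! i = (fst (rs ! i) @ fst (snd (rs ! i)), [],
       if snd (snd (rs ! i)) = 26 \<or> (\<not> ?f' \<and> Pf (rs ! i) \<and> (\<forall>i'<i. \<not> Pf (rs ! i'))) then 26 else 11)"
    "fst (selL ?f' rs) \<longleftrightarrow> ?f' \<or> (\<exists>i<length rs. Pf (rs ! i))"
    using Cons.IH[of ?f'] by auto
  have A: "length (snd (selL f (r # rs))) = length (r # rs)" using IH(1) by (simp del: selR.simps)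
  have B: "\<forall>i<length (r # rs). snd (selL f (r # rs)) ! i = (fst ((r # rs) ! i) @ fst (snd ((r # rs) ! i)), [],
       if snd (snd ((r # rs) ! i)) = 26 \<or> (\<not> f \<and> Pf ((r # rs) ! i) \<and> (\<forall>i'<i. \<not> Pf ((r # rs) ! i'))) then 26 else 11)"
  proof (intro allI impI)
    fix i assume i: "i < length (r # rs)"
    show "snd (selL f (r # rs)) ! i = (fst ((r # rs) ! i) @ fst (snd ((r # rs) ! i)), [],
       if snd (snd ((r # rs) ! i)) = 26 \<or> (\<not> f \<and> Pf ((r # rs) ! i) \<and> (\<forall>i'<i. \<not> Pf ((r # rs) ! i'))) then 26 else 11)"
    proof (cases i)
      case 0
      then show ?thesis by (simp add: selR_snd del: selR.simps)
    next
      case (Suc i0)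
      have i0: "i0 < length rs" using i Suc by simp
      have q: "(\<forall>i'<Suc i0. \<not> Pf ((r # rs) ! i')) \<longleftrightarrow> \<not> Pf r \<and> (\<forall>i'<i0. \<not> Pf (rs ! i'))"
        by (auto simp: less_Suc_eq_0_disj)
      show ?thesis using IH(2)[OF i0] Suc q by (simp add: selR_fst del: selR.simps)
    qed
  qed
  have C: "fst (selL f (r # rs)) \<longleftrightarrow> f \<or> (\<exists>i<length (r # rs). Pf ((r # rs) ! i))"
    using IH(3) by (auto simp: selR_fst less_Suc_eq_0_disj simp del: selR.simps)
  show ?case using A B C by blast
qed

lemma digs_dd: "digs (dd n)" using dd_lt by (simp add: digs_def)

lemma digs_app: "digs (xs @ ys) \<longleftrightarrow> digs xs \<and> digs ys" by (auto simp: digs_def)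
lemma digs_Cons: "digs (x # ys) \<longleftrightarrow> x < 10 \<and> digs ys" by (auto simp: digs_def)

lemma arok_recok: "arok as vb f j i r \<Longrightarrow> recok r"
proof -
  assume a: "arok as vb f j i r"
  obtain u v st where e: "r = (u, v, st)" by (cases r) auto
  have uv: "u @ v = dd (as ! i)" and st: "st = 11 \<or> st = 25 \<or> st = 26" using a e by (auto simp: arok_def)
  have "digs u \<and> digs v" using digs_dd[of "as ! i"] unfolding uv[symmetric] digs_app .
  then show "recok r" using e st by (auto simp: recok_def)
qed

lemma INV_recok: "INV S as bs su sv ar j ub vb f \<Longrightarrow> \<forall>r\<in>set ar. recok r"
proof
  fix r assume I: "INV S as bs su sv ar j ub vb f" and r: "r \<in> set ar"
  then obtain i where i: "i < length ar" "r = ar ! i" by (auto simp: in_set_conv_nth)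
  then have "arok as vb f j i r" using I by (auto simp: INV_def)
  then show "recok r" by (rule arok_recok)
qed

lemma drec_done: "\<forall>r\<in>set (map (\<lambda>b. ([], dd b, 27)) xs). drec r"
  by (auto simp: drec_def digs_dd)

lemma case_final:
  assumes I: "INV S as bs su sv ar j ub vb f" and j: "j = length bs" and N: "N = length (ss_input S as bs)"
  shows "\<exists>k \<le> 3 * N. \<exists>c. reach N (RSc bs su sv ar j ub vb) k c \<and> (fst c = 11 \<or> fst c = 12) \<and>
            (fst c = 11 \<longleftrightarrow> valid_certificate S as bs)"
proof -
  have ub: "ub = []" "vb = []" using I j by (auto simp: INV_def)
  have sv: "sv = []" using I ub by (auto simp: INV_def)
  have br: "brecs bs j ub vb = map (\<lambda>b. ([], dd b, 27)) bs" using j by (simp add: brecs_def)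
  have su: "digs su" using I by (simp add: INV_def)
  have LT: "length (tapeL su sv ar (brecs bs j ub vb)) = N" using len_tape[OF I] N by simp
  obtain k c where kc: "k \<le> 3 * length (tapeL su [] ar (map (\<lambda>b. ([], dd b, 27)) bs))"
    "reach N (1, tape_of (tapeL su [] ar (map (\<lambda>b. ([], dd b, 27)) bs)), int (length su + 4 + length (concat (map rr ar)))) k c"
    "fst c = 11 \<or> fst c = 12" "fst c = 11 \<longleftrightarrow> val su = 0"
    using final_lem[OF su INV_recok[OF I] drec_done] LT br sv by fastforce
  have S: "val su + sum_list bs = S" using I j ub sv by (simp add: INV_def)
  have f: "inj_on f {..<length bs}" "\<forall>i<length bs. f i < length as \<and> as ! (f i) = bs ! i"
    using I j by (auto simp: INV_def)
  have V: "val su = 0 \<longleftrightarrow> valid_certificate S as bs"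
  proof
    assume "val su = 0"
    then show "valid_certificate S as bs" unfolding valid_certificate_def using S f by (intro exI[of _ f]) auto
  next
    assume "valid_certificate S as bs"
    then have "sum_list bs = S" by (auto simp: valid_certificate_def)
    then show "val su = 0" using S by simp
  qed
  have R: "reach N (RSc bs su sv ar j ub vb) k c" using kc(2) br sv by (simp add: RSc_def)
  show ?thesis
    apply (rule exI[of _ k], rule conjI)
    using kc(1) LT br sv apply simp
    apply (rule exI[of _ c])
    using R kc(3,4) V by simp
qed

lemma sfx_Cons: "sfx (x # vb) ys \<Longrightarrow> sfx vb ys"
proof -
  assume "sfx (x # vb) ys"
  then obtain zs where "ys = zs @ x # vb" by (auto simp: sfx_def)
  then have "ys = (zs @ [x]) @ vb" by simp
  then show "sfx vb ys" unfolding sfx_def by blast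
qed

lemma arok_step:
  assumes "arok as vb f j i r"
  shows "arok as (x # vb) f j i (procA x r)"
proof -
  obtain u v st where e: "r = (u, v, st)" by (cases r) auto
  have a: "u @ v = dd (as ! i)" "st = 11 \<or> st = 25 \<or> st = 26" "st = 26 \<longleftrightarrow> i \<in> f ` {..<j}"
    "st = 11 \<longrightarrow> v = vb" "st = 25 \<longrightarrow> \<not> sfx vb (dd (as ! i))"
    using assms e by (auto simp: arok_def)
  show ?thesis
  proof (cases "u \<noteq> [] \<and> last u = x")
    case True
    have u: "butlast u @ [last u] = u" using True by (intro append_butlast_last_id) simp
    have "butlast u @ x # v = u @ v" using True by (subst (2) u[symmetric]) simp
    then show ?thesis using a e True sfx_Cons[of x vb] by (auto simp: arok_def)
  next
    case False
    have n11: "st = 11 \<Longrightarrow> \<not> sfx (x # vb) (dd (as ! i))"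
    proof
      assume st: "st = 11" and sf: "sfx (x # vb) (dd (as ! i))"
      then obtain zs where "u @ vb = zs @ x # vb" using a(1,4) by (auto simp: sfx_def)
      then have "u = zs @ [x]" by simp
      then show False using False by simp
    qed
    show ?thesis using a e False n11 sfx_Cons[of x vb] by (auto simp: arok_def)
  qed
qed

lemma len_map_procA: "length (concat (map rr (map (procA x) ar))) = length (concat (map rr ar))"
  by (induction ar) auto

lemma len_map_procA2: "length (concat (map (rr \<circ> procA x) ar)) = length (concat (map rr ar))"
  by (induction ar) auto

lemma sum_take_le: "j < length bs \<Longrightarrow> sum_list (take j bs) + bs ! j \<le> sum_list (bs :: nat list)"
proof -
  assume j: "j < length bs"
  have "take (Suc j) bs = take j bs @ [bs ! j]" using j by (simp add: take_Suc_conv_app_nth)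
  then have e: "sum_list (take (Suc j) bs) = sum_list (take j bs) + bs ! j" by simp
  have "sum_list bs = sum_list (take (Suc j) bs) + sum_list (drop (Suc j) bs)"
    by (metis append_take_drop_id sum_list_append)
  then show ?thesis using e by (metis le_add1)
qed

lemma reject_round:
  assumes I: "INV S as bs su sv ar j (ub0 @ [x]) vb f" and j: "j < length bs"
    and c: "su = [] \<or> val (su @ sv) < x * 10 ^ length sv"
  shows "\<not> valid_certificate S as bs"
proof -
  have a: "ub0 @ [x] @ vb = dd (bs ! j)" "length su + length sv = length (dd S)" "length sv = length vb"
    "val (su @ sv) + sum_list (take j bs) + val vb = S"
    using I j by (auto simp: INV_def)
  have bj: "val (x # vb) \<le> bs ! j"
  proof -
    have "val (ub0 @ x # vb) = bs ! j" using a(1) dd_val[of "bs ! j"] by simp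
    then show ?thesis using val_append[of ub0 "x # vb"] by simp
  qed
  have "S < sum_list bs"
    using c
  proof
    assume su: "su = []"
    have l0: "length (dd (bs ! j)) = length ub0 + 1 + length vb" using arg_cong[OF a(1), of length] by simp
    have l: "length (dd (bs ! j)) \<ge> length (dd S) + 1" using l0 a(2,3) su by simp
    have "length (dd S) \<ge> 1" using dd_ne[of S] by (simp add: Suc_leI)
    then have l2: "length (dd (bs ! j)) \<ge> 2" using l by simp
    have p: "10 ^ (length (dd (bs ! j)) - 1) \<le> max 1 (bs ! j)" by (rule dd_low)
    have "10 ^ 1 \<le> (10::nat) ^ (length (dd (bs ! j)) - 1)" using l2 by (intro power_increasing) auto
    then have "max 1 (bs ! j) = bs ! j" using p by simp
    then have "10 ^ (length (dd (bs ! j)) - 1) \<le> bs ! j" using p by simp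
    moreover have "(10::nat) ^ length (dd S) \<le> 10 ^ (length (dd (bs ! j)) - 1)" using l by (intro power_increasing) auto
    moreover have "S < 10 ^ length (dd S)" by (rule dd_bound)
    ultimately have "S < bs ! j" by linarith
    then show ?thesis using sum_take_le[OF j] by linarith
  next
    assume v: "val (su @ sv) < x * 10 ^ length sv"
    have "val (x # vb) = x * 10 ^ length sv + val vb" using a(3) by (simp add: val_Cons)
    then have "S < sum_list (take j bs) + val (x # vb)" using v a(4) by linarith
    then show ?thesis using bj sum_take_le[OF j] by linarith
  qed
  then show ?thesis by (auto simp: valid_certificate_def)
qed

lemma brecs_split: "j < length bs \<Longrightarrow> brecs bs j ub vb =
   map (\<lambda>b. ([], dd b, 27)) (take j bs) @ [(ub, vb, 11)] @ map (\<lambda>b. (dd b, [], 11)) (drop (Suc j) bs)"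
  by (simp add: brecs_def)

lemma case_round:
  assumes I: "INV S as bs su sv ar j (ub0 @ [x]) vb f" and j: "j < length bs" and N: "N = length (ss_input S as bs)"
  shows "\<exists>k \<le> 10 * N. \<exists>c. reach N (RSc bs su sv ar j (ub0 @ [x]) vb) k c \<and>
     ((fst c = 12 \<and> \<not> valid_certificate S as bs) \<or>
      (\<exists>su' sv'. c = RSc bs su' sv' (map (procA x) ar) j ub0 (x # vb) \<and> INV S as bs su' sv' (map (procA x) ar) j ub0 (x # vb) f))"
proof -
  let ?D = "map (\<lambda>b. ([], dd b, 27::nat)) (take j bs)"
  let ?F = "map (\<lambda>b. (dd b, [], 11::nat)) (drop (Suc j) bs)"
  let ?T = "tapeL su sv ar (brecs bs j (ub0 @ [x]) vb)"
  let ?br' = "?D @ [(ub0, x # vb, 11)] @ ?F"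
  let ?T' = "tapeL su sv ar ?br'"
  have a: "ub0 @ [x] @ vb = dd (bs ! j)" "digs su" "digs sv" "length su + length sv = length (dd S)"
    "length sv = length vb" "val (su @ sv) + sum_list (take j bs) + val vb = S" "length ar = length as"
    "\<forall>i < length as. arok as vb f j i (ar ! i)" "inj_on f {..<j}" "\<forall>i<j. f i < length as \<and> as ! (f i) = bs ! i"
    using I j by (auto simp: INV_def)
  have dg: "digs ub0" "x < 10" "digs vb" using digs_dd[of "bs ! j"] unfolding a(1)[symmetric]
    by (auto simp: digs_app digs_Cons)
  have LT: "length ?T = N" using len_tape[OF I] N by simp
  have N6: "N \<ge> 5" using LT by (simp add: tapeL_def)
  have Tsp: "?T = tapeL su sv ar (?D @ [(ub0 @ [x], vb, 11)] @ ?F)" using j by (simp add: brecs_def)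
  obtain k1 where k1: "k1 \<le> 4 * length ?T + 3"
    "reach N (1, tape_of ?T, int (length su + length sv + 4 + length (concat (map rr ar)))) k1 (carry2 x, tape_of ?T', int (length su) - 1)"
    using round_front[OF a(2,3) INV_recok[OF I] drec_done dg(1,2,3) Tsp refl] LT by auto
  have LT': "length ?T' = N" using LT by (simp add: tapeL_def j brecs_def)
  have "\<exists>k \<le> 5 * length ?T'. \<exists>c. reach N (carry2 x, tape_of ?T', int (length su) - 1) k c \<and>
    ((fst c = 12 \<and> (su = [] \<or> val (su @ sv) < x * 10 ^ length sv)) \<or>
     (\<exists>su' sv'. c = (1, tape_of (tapeL su' sv' (map (procA x) ar) ?br'),
                   int (length su + length sv + 4 + length (concat (map rr ar)))) \<and>
        digs su' \<and> digs sv' \<and> length su' + length sv' = length su + length sv \<and>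
        length sv' = length sv + 1 \<and> val (su' @ sv') + x * 10 ^ length sv = val (su @ sv)))"
    by (rule round_sub[OF a(2,3) INV_recok[OF I] dg(2)]) (use LT' in auto)
  then obtain k2 c where k2: "k2 \<le> 5 * length ?T'" "reach N (carry2 x, tape_of ?T', int (length su) - 1) k2 c"
    "(fst c = 12 \<and> (su = [] \<or> val (su @ sv) < x * 10 ^ length sv)) \<or>
     (\<exists>su' sv'. c = (1, tape_of (tapeL su' sv' (map (procA x) ar) ?br'),
                   int (length su + length sv + 4 + length (concat (map rr ar)))) \<and>
        digs su' \<and> digs sv' \<and> length su' + length sv' = length su + length sv \<and>
        length sv' = length sv + 1 \<and> val (su' @ sv') + x * 10 ^ length sv = val (su @ sv))"
    by blast
  have R: "reach N (RSc bs su sv ar j (ub0 @ [x]) vb) (k1 + k2) c"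
    using reach_trans[OF k1(2) k2(2)] by (simp add: RSc_def)
  have K: "k1 + k2 \<le> 10 * N" using k1(1) k2(1) LT LT' N6 by simp
  show ?thesis
  proof (rule exI[of _ "k1 + k2"], rule conjI[OF K], rule exI[of _ c], rule conjI[OF R])
    show "(fst c = 12 \<and> \<not> valid_certificate S as bs) \<or>
      (\<exists>su' sv'. c = RSc bs su' sv' (map (procA x) ar) j ub0 (x # vb) \<and> INV S as bs su' sv' (map (procA x) ar) j ub0 (x # vb) f)"
      using k2(3)
    proof
      assume "fst c = 12 \<and> (su = [] \<or> val (su @ sv) < x * 10 ^ length sv)"
      then show ?thesis using reject_round[OF I j] by blast
    next
      assume "\<exists>su' sv'. c = (1, tape_of (tapeL su' sv' (map (procA x) ar) ?br'),
                   int (length su + length sv + 4 + length (concat (map rr ar)))) \<and>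
        digs su' \<and> digs sv' \<and> length su' + length sv' = length su + length sv \<and>
        length sv' = length sv + 1 \<and> val (su' @ sv') + x * 10 ^ length sv = val (su @ sv)"
      then obtain su' sv' where s: "c = (1, tape_of (tapeL su' sv' (map (procA x) ar) ?br'),
                   int (length su + length sv + 4 + length (concat (map rr ar))))"
        "digs su'" "digs sv'" "length su' + length sv' = length su + length sv"
        "length sv' = length sv + 1" "val (su' @ sv') + x * 10 ^ length sv = val (su @ sv)" by blast
      have C: "c = RSc bs su' sv' (map (procA x) ar) j ub0 (x # vb)"
        using s(1,4) j by (simp add: RSc_def brecs_def len_map_procA2)
      have V: "val (su' @ sv') + sum_list (take j bs) + val (x # vb) = S"
        using s(6) a(5,6) by (simp add: val_Cons)
      have AR: "\<forall>i < length as. arok as (x # vb) f j i (map (procA x) ar ! i)"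
        using a(7,8) arok_step by simp
      have "INV S as bs su' sv' (map (procA x) ar) j ub0 (x # vb) f"
        unfolding INV_def using j a s V AR by simp
      then show ?thesis using C by blast
    qed
  qed
qed

lemma len_selL: "length (concat (map rr (snd (selL f rs)))) = length (concat (map rr rs))"
  by (induction rs arbitrary: f) (auto simp del: selR.simps)

lemma nofound_invalid:
  assumes I: "INV S as bs su sv ar j [] vb f" and j: "j < length bs" and nf: "\<not> (\<exists>i<length ar. Pf (ar ! i))"
  shows "\<not> valid_certificate S as bs"
proof
  assume "valid_certificate S as bs"
  then obtain g where g: "inj_on g {..<length bs}" "\<forall>i<length bs. g i < length as \<and> bs ! i = as ! g i"
    by (auto simp: valid_certificate_def)
  have a: "vb = dd (bs ! j)" "length ar = length as" "\<forall>i < length as. arok as vb f j i (ar ! i)"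
    "inj_on f {..<j}" "\<forall>i<j. f i < length as \<and> as ! (f i) = bs ! i"
    using I j by (auto simp: INV_def)
  let ?b = "bs ! j"
  let ?A = "{i. i < length as \<and> as ! i = ?b}"
  let ?B = "{i. i < j \<and> bs ! i = ?b}"
  have AB: "?A \<subseteq> f ` ?B"
  proof
    fix i assume i: "i \<in> ?A"
    obtain u v st where e: "ar ! i = (u, v, st)" by (cases "ar ! i") auto
    have ar: "u @ v = dd (as ! i)" "st = 11 \<or> st = 25 \<or> st = 26" "st = 26 \<longleftrightarrow> i \<in> f ` {..<j}"
      "st = 11 \<longrightarrow> v = vb" "st = 25 \<longrightarrow> \<not> sfx vb (dd (as ! i))"
      using a(3) i e by (auto simp: arok_def)
    have dai: "dd (as ! i) = vb" using i a(1) by simp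
    have "st \<noteq> 11"
    proof
      assume "st = 11"
      then have "u = []" using ar(1,4) dai by simp
      then have "Pf (ar ! i)" using e \<open>st = 11\<close> by (simp add: Pf_def)
      then show False using nf i a(2) by auto
    qed
    moreover have "st \<noteq> 25" using ar(5) dai by (auto simp: sfx_def)
    ultimately have "i \<in> f ` {..<j}" using ar(2,3) by auto
    then obtain i' where i': "i' < j" "i = f i'" by auto
    have "bs ! i' = ?b" using a(5) i' i by auto
    then show "i \<in> f ` ?B" using i' by auto
  qed
  have finB: "finite ?B" by simp
  have finA: "finite ?A" by simp
  have c1: "card ?A \<le> card ?B"
    using card_mono[OF finite_imageI[OF finB] AB] card_image_le[OF finB, of f] by linarith
  have sub: "insert j ?B \<subseteq> {..<length bs}" using j by auto
  have inj: "inj_on g (insert j ?B)" using inj_on_subset[OF g(1) sub] .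
  have gA: "g ` insert j ?B \<subseteq> ?A" using g(2) sub by auto
  have "card (insert j ?B) = card ?B + 1" using finB by simp
  moreover have "card (g ` insert j ?B) = card (insert j ?B)" using card_image[OF inj] .
  moreover have "card (g ` insert j ?B) \<le> card ?A" using card_mono[OF finA gA] .
  ultimately show False using c1 by linarith
qed

lemma found_INV:
  assumes I: "INV S as bs su sv ar j [] vb f" and j: "j < length bs" and fd: "\<exists>i<length ar. Pf (ar ! i)"
    and i0: "i0 = (LEAST i. i < length ar \<and> Pf (ar ! i))"
  shows "INV S as bs (su @ sv) [] (snd (selL False ar)) (Suc j) (if Suc j < length bs then dd (bs ! Suc j) else []) [] (f(j := i0))"
proof -
  have a: "vb = dd (bs ! j)" "digs su" "digs sv" "length su + length sv = length (dd S)"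
    "val (su @ sv) + sum_list (take j bs) + val vb = S" "length ar = length as"
    "\<forall>i < length as. arok as vb f j i (ar ! i)" "inj_on f {..<j}" "\<forall>i<j. f i < length as \<and> as ! (f i) = bs ! i"
    using I j by (auto simp: INV_def)
  have L: "i0 < length ar \<and> Pf (ar ! i0)" using LeastI_ex[OF fd] i0 by simp
  have Lm: "\<And>i. i < i0 \<Longrightarrow> \<not> (i < length ar \<and> Pf (ar ! i))" using not_less_Least i0 by blast
  have first: "\<And>i. i < length ar \<Longrightarrow> (Pf (ar ! i) \<and> (\<forall>i'<i. \<not> Pf (ar ! i'))) \<longleftrightarrow> i = i0"
  proof -
    fix i assume i: "i < length ar"
    show "(Pf (ar ! i) \<and> (\<forall>i'<i. \<not> Pf (ar ! i'))) \<longleftrightarrow> i = i0"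
    proof
      assume h: "Pf (ar ! i) \<and> (\<forall>i'<i. \<not> Pf (ar ! i'))"
      have "\<not> i < i0" using Lm i h by blast
      moreover have "\<not> i0 < i" using h L by blast
      ultimately show "i = i0" by simp
    next
      assume "i = i0"
      then show "Pf (ar ! i) \<and> (\<forall>i'<i. \<not> Pf (ar ! i'))" using L Lm i by auto
    qed
  qed
  note spec = selL_spec[of False ar]
  let ?ar' = "snd (selL False ar)"
  let ?f' = "f(j := i0)"
  have i0n: "i0 \<notin> f ` {..<j}"
  proof
    assume "i0 \<in> f ` {..<j}"
    moreover obtain u v st where e: "ar ! i0 = (u, v, st)" by (cases "ar ! i0") auto
    moreover have "st = 11" using L e by (simp add: Pf_def)
    ultimately show False using a(6,7) L e by (auto simp: arok_def)
  qed
  have ai0: "as ! i0 = bs ! j"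
  proof -
    obtain u v st where e: "ar ! i0 = (u, v, st)" by (cases "ar ! i0") auto
    have "st = 11" "u = []" using L e by (auto simp: Pf_def)
    then have "dd (as ! i0) = vb" using a(6,7) L e by (auto simp: arok_def)
    then show ?thesis using a(1) dd_inj by metis
  qed
  have img: "?f' ` {..<Suc j} = insert i0 (f ` {..<j})"
  proof -
    have "{..<Suc j} = insert j {..<j}" by auto
    moreover have "?f' ` {..<j} = f ` {..<j}" by auto
    ultimately show ?thesis by (metis fun_upd_same image_insert)
  qed
  have AR: "\<forall>i < length as. arok as [] ?f' (Suc j) i (?ar' ! i)"
  proof (intro allI impI)
    fix i assume i: "i < length as"
    obtain u v st where e: "ar ! i = (u, v, st)" by (cases "ar ! i") auto
    have ar: "u @ v = dd (as ! i)" "st = 26 \<longleftrightarrow> i \<in> f ` {..<j}"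
      using a(7) i e by (auto simp: arok_def)
    have e': "?ar' ! i = (u @ v, [], if st = 26 \<or> i = i0 then 26 else 11)"
      using spec i a(6) e first[of i] by auto
    show "arok as [] ?f' (Suc j) i (?ar' ! i)"
      unfolding e' arok_def using ar img by auto
  qed
  have inj: "inj_on ?f' {..<Suc j}"
  proof -
    have "{..<Suc j} = insert j {..<j}" by auto
    moreover have "inj_on ?f' {..<j}" using a(8) by (simp add: inj_on_def)
    moreover have "?f' j \<notin> ?f' ` ({..<j} - {j})" using i0n by auto
    ultimately show ?thesis by (simp add: inj_on_insert)
  qed
  have FS: "\<forall>i<Suc j. ?f' i < length as \<and> as ! (?f' i) = bs ! i"
    using a(9) L a(6) ai0 by (auto simp: less_Suc_eq)
  have V: "val ((su @ sv) @ []) + sum_list (take (Suc j) bs) + val [] = S"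
    using a(5) a(1) j dd_val[of "bs ! j"] by (simp add: take_Suc_conv_app_nth)
  have LA: "length ?ar' = length as" using spec a(6) by simp
  have DG: "digs (su @ sv)" "digs []" using a(2,3) by (auto simp: digs_def)
  have DB: "Suc j < length bs \<longrightarrow> dd (bs ! Suc j) @ [] = dd (bs ! Suc j)" by simp
  show ?thesis unfolding INV_def
    using j a(4) AR inj FS V LA DG by simp
qed

lemma brecs_next:
  assumes j: "j < length bs" and vb: "vb = dd (bs ! j)"
  shows "brecs bs (Suc j) (if Suc j < length bs then dd (bs ! Suc j) else []) [] =
     map (\<lambda>b. ([], dd b, 27)) (take j bs) @ [([], vb, 27)] @ map (\<lambda>b. (dd b, [], 11)) (drop (Suc j) bs)"
proof (cases "Suc j < length bs")
  case True
  have "drop (Suc j) bs = bs ! Suc j # drop (Suc (Suc j)) bs" using True by (simp add: Cons_nth_drop_Suc)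
  then show ?thesis using True j vb by (simp add: brecs_def take_Suc_conv_app_nth)
next
  case False
  have d: "drop (Suc j) bs = []" using False by simp
  have e: "take (Suc j) bs = take j bs @ [bs ! j]" by (rule take_Suc_conv_app_nth[OF j])
  show ?thesis using False vb d unfolding brecs_def e by simp
qed

lemma case_fin:
  assumes I: "INV S as bs su sv ar j [] vb f" and j: "j < length bs" and N: "N = length (ss_input S as bs)"
  shows "\<exists>k \<le> 10 * N. \<exists>c. reach N (RSc bs su sv ar j [] vb) k c \<and>
     ((fst c = 12 \<and> \<not> valid_certificate S as bs) \<or>
      (\<exists>ar' f'. c = RSc bs (su @ sv) [] ar' (Suc j) (if Suc j < length bs then dd (bs ! Suc j) else []) [] \<and>
          INV S as bs (su @ sv) [] ar' (Suc j) (if Suc j < length bs then dd (bs ! Suc j) else []) [] f'))"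
proof -
  let ?D = "map (\<lambda>b. ([], dd b, 27::nat)) (take j bs)"
  let ?F = "map (\<lambda>b. (dd b, [], 11::nat)) (drop (Suc j) bs)"
  let ?T = "tapeL su sv ar (brecs bs j [] vb)"
  have a: "vb = dd (bs ! j)" "digs su" "digs sv" using I j by (auto simp: INV_def)
  have LT: "length ?T = N" using len_tape[OF I] N by simp
  have Tsp: "?T = tapeL su sv ar (?D @ [([], vb, 11)] @ ?F)" using j by (simp add: brecs_def)
  have "\<exists>k \<le> 10 * length ?T. \<exists>c. reach N (1, tape_of ?T, int (length su + length sv + 4 + length (concat (map rr ar)))) k c \<and>
    (if fst (selL False ar) then c = (1, tape_of (tapeL (su @ sv) [] (snd (selL False ar)) (?D @ [([], vb, 27)] @ ?F)),
       int (length su + length sv + 4 + length (concat (map rr ar))))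
     else fst c = 12)"
    by (rule finalize[OF a(2,3) INV_recok[OF I] drec_done _ Tsp]) (use a(1) digs_dd LT in auto)
  then obtain k c where kc: "k \<le> 10 * length ?T" "reach N (1, tape_of ?T, int (length su + length sv + 4 + length (concat (map rr ar)))) k c"
    "if fst (selL False ar) then c = (1, tape_of (tapeL (su @ sv) [] (snd (selL False ar)) (?D @ [([], vb, 27)] @ ?F)),
       int (length su + length sv + 4 + length (concat (map rr ar))))
     else fst c = 12" by blast
  have R: "reach N (RSc bs su sv ar j [] vb) k c" using kc(2) by (simp add: RSc_def)
  have K: "k \<le> 10 * N" using kc(1) LT by simp
  have spec: "fst (selL False ar) \<longleftrightarrow> (\<exists>i<length ar. Pf (ar ! i))" using selL_spec[of False ar] by simp
  show ?thesis
  proof (rule exI[of _ k], rule conjI[OF K], rule exI[of _ c], rule conjI[OF R])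
    show "(fst c = 12 \<and> \<not> valid_certificate S as bs) \<or>
      (\<exists>ar' f'. c = RSc bs (su @ sv) [] ar' (Suc j) (if Suc j < length bs then dd (bs ! Suc j) else []) [] \<and>
          INV S as bs (su @ sv) [] ar' (Suc j) (if Suc j < length bs then dd (bs ! Suc j) else []) [] f')"
    proof (cases "fst (selL False ar)")
      case True
      have fd: "\<exists>i<length ar. Pf (ar ! i)" using True spec by simp
      have C: "c = RSc bs (su @ sv) [] (snd (selL False ar)) (Suc j) (if Suc j < length bs then dd (bs ! Suc j) else []) []"
        using kc(3) True brecs_next[OF j a(1)] by (simp add: RSc_def len_selL)
      have "INV S as bs (su @ sv) [] (snd (selL False ar)) (Suc j) (if Suc j < length bs then dd (bs ! Suc j) else []) []
              (f(j := (LEAST i. i < length ar \<and> Pf (ar ! i))))"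
        by (rule found_INV[OF I j fd refl])
      then show ?thesis using C by blast
    next
      case False
      have "\<not> (\<exists>i<length ar. Pf (ar ! i))" using False spec by simp
      then show ?thesis using nofound_invalid[OF I j] kc(3) False by simp
    qed
  qed
qed

lemma mu_fin:
  assumes "j < length bs"
  shows "mu bs (Suc j) (if Suc j < length bs then dd (bs ! Suc j) else []) < mu bs j []"
proof (cases "Suc j < length bs")
  case True
  have "drop (Suc j) bs = bs ! Suc j # drop (Suc (Suc j)) bs" using True by (simp add: Cons_nth_drop_Suc)
  then show ?thesis using True assms by (simp add: mu_def)
next
  case False
  then show ?thesis using assms by (simp add: mu_def)
qed

lemma main_loop:
  "INV S as bs su sv ar j ub vb f \<Longrightarrow> mu bs j ub = m \<Longrightarrow> N = length (ss_input S as bs) \<Longrightarrow>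
   \<exists>k \<le> 10 * N * m + 3 * N. \<exists>c. reach N (RSc bs su sv ar j ub vb) k c \<and> (fst c = 11 \<or> fst c = 12) \<and>
      (fst c = 11 \<longleftrightarrow> valid_certificate S as bs)"
proof (induction m arbitrary: su sv ar j ub vb f rule: less_induct)
  case (less m)
  note I = less.prems(1)
  have jl: "j \<le> length bs" using I by (simp add: INV_def)
  show ?case
  proof (cases "j = length bs")
    case True
    obtain k c where "k \<le> 3 * N" "reach N (RSc bs su sv ar j ub vb) k c" "fst c = 11 \<or> fst c = 12"
      "fst c = 11 \<longleftrightarrow> valid_certificate S as bs"
      using case_final[OF I True less.prems(3)] by blast
    then show ?thesis by (intro exI[of _ k] conjI exI[of _ c]) auto
  next
    case False
    then have j: "j < length bs" using jl by simp
    have m1: "1 \<le> m" using less.prems(2) j by (simp add: mu_def)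
    have m10: "10 * N \<le> 10 * N * m" using m1 by simp
    show ?thesis
    proof (cases ub rule: rev_exhaust)
      case Nil
      let ?ub' = "if Suc j < length bs then dd (bs ! Suc j) else []"
      obtain k c where kc: "k \<le> 10 * N" "reach N (RSc bs su sv ar j [] vb) k c"
        "(fst c = 12 \<and> \<not> valid_certificate S as bs) \<or>
         (\<exists>ar' f'. c = RSc bs (su @ sv) [] ar' (Suc j) ?ub' [] \<and> INV S as bs (su @ sv) [] ar' (Suc j) ?ub' [] f')"
        using case_fin[OF I[unfolded Nil] j less.prems(3)] by blast
      show ?thesis using kc(3)
      proof
        assume "fst c = 12 \<and> \<not> valid_certificate S as bs"
        moreover have "k \<le> 10 * N * m + 3 * N" using kc(1) m10 by linarith
        ultimately show ?thesis using kc(2) Nil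
          by (intro exI[of _ k] conjI exI[of _ c]) auto
      next
        assume "\<exists>ar' f'. c = RSc bs (su @ sv) [] ar' (Suc j) ?ub' [] \<and> INV S as bs (su @ sv) [] ar' (Suc j) ?ub' [] f'"
        then obtain ar' f' where c: "c = RSc bs (su @ sv) [] ar' (Suc j) ?ub' []"
          and I': "INV S as bs (su @ sv) [] ar' (Suc j) ?ub' [] f'" by blast
        have lt: "mu bs (Suc j) ?ub' < m" using mu_fin[OF j] less.prems(2) Nil by simp
        obtain k' c' where kc': "k' \<le> 10 * N * mu bs (Suc j) ?ub' + 3 * N"
          "reach N (RSc bs (su @ sv) [] ar' (Suc j) ?ub' []) k' c'" "fst c' = 11 \<or> fst c' = 12"
          "fst c' = 11 \<longleftrightarrow> valid_certificate S as bs"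
          using less.IH[OF lt I' refl less.prems(3)] by blast
        have R: "reach N (RSc bs su sv ar j ub vb) (k + k') c'" using reach_trans[OF kc(2)[unfolded c] kc'(2)] Nil by simp
        have "10 * N * mu bs (Suc j) ?ub' + 10 * N \<le> 10 * N * m"
        proof -
          have "mu bs (Suc j) ?ub' + 1 \<le> m" using lt by simp
          then have "10 * N * (mu bs (Suc j) ?ub' + 1) \<le> 10 * N * m" by (rule mult_le_mono2)
          then show ?thesis by (simp add: algebra_simps)
        qed
        then have K: "k + k' \<le> 10 * N * m + 3 * N" using kc(1) kc'(1) by linarith
        show ?thesis using R K kc'(3,4) by (intro exI[of _ "k + k'"] conjI exI[of _ c']) auto
      qed
    next
      case (snoc ub0 x)
      obtain k c where kc: "k \<le> 10 * N" "reach N (RSc bs su sv ar j (ub0 @ [x]) vb) k c"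
        "(fst c = 12 \<and> \<not> valid_certificate S as bs) \<or>
         (\<exists>su' sv'. c = RSc bs su' sv' (map (procA x) ar) j ub0 (x # vb) \<and> INV S as bs su' sv' (map (procA x) ar) j ub0 (x # vb) f)"
        using case_round[OF I[unfolded snoc] j less.prems(3)] by blast
      show ?thesis using kc(3)
      proof
        assume "fst c = 12 \<and> \<not> valid_certificate S as bs"
        moreover have "k \<le> 10 * N * m + 3 * N" using kc(1) m10 by linarith
        ultimately show ?thesis using kc(2) snoc
          by (intro exI[of _ k] conjI exI[of _ c]) auto
      next
        assume "\<exists>su' sv'. c = RSc bs su' sv' (map (procA x) ar) j ub0 (x # vb) \<and> INV S as bs su' sv' (map (procA x) ar) j ub0 (x # vb) f"
        then obtain su' sv' where c: "c = RSc bs su' sv' (map (procA x) ar) j ub0 (x # vb)"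
          and I': "INV S as bs su' sv' (map (procA x) ar) j ub0 (x # vb) f" by blast
        have lt: "mu bs j ub0 < m" using less.prems(2) snoc j by (simp add: mu_def)
        obtain k' c' where kc': "k' \<le> 10 * N * mu bs j ub0 + 3 * N"
          "reach N (RSc bs su' sv' (map (procA x) ar) j ub0 (x # vb)) k' c'" "fst c' = 11 \<or> fst c' = 12"
          "fst c' = 11 \<longleftrightarrow> valid_certificate S as bs"
          using less.IH[OF lt I' refl less.prems(3)] by blast
        have R: "reach N (RSc bs su sv ar j ub vb) (k + k') c'" using reach_trans[OF kc(2)[unfolded c] kc'(2)] snoc by simp
        have "10 * N * mu bs j ub0 + 10 * N \<le> 10 * N * m"
        proof -
          have "mu bs j ub0 + 1 \<le> m" using lt by simp
          then have "10 * N * (mu bs j ub0 + 1) \<le> 10 * N * m" by (rule mult_le_mono2)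
          then show ?thesis by (simp add: algebra_simps)
        qed
        then have K: "k + k' \<le> 10 * N * m + 3 * N" using kc(1) kc'(1) by linarith
        show ?thesis using R K kc'(3,4) by (intro exI[of _ "k + k'"] conjI exI[of _ c']) auto
      qed
    qed
  qed
qed

lemma initial_MSS: "initial_config MSS w = (0, tape_of w, 0)"
  unfolding initial_config_def MSS_def tape_of_def blank_sym_def by simp

lemma run_all:
  fixes S :: nat and as bs :: "nat list"
  defines "N \<equiv> length (ss_input S as bs)"
  shows "\<exists>k \<le> 14 * N ^ 2. \<exists>c. reach N (initial_config MSS (ss_input S as bs)) k c \<and> (fst c = 11 \<or> fst c = 12) \<and>
            (fst c = 11 \<longleftrightarrow> valid_certificate S as bs)"
proof -
  let ?ar = "map (\<lambda>a. (dd a, [], 11::nat)) as"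
  let ?br = "map (\<lambda>b. (dd b, [], 11::nat)) bs"
  let ?w = "ss_input S as bs"
  let ?ub = "if 0 < length bs then dd (bs ! 0) else []"
  have w: "?w = tapeL (dd S) [] ?ar ?br" by (rule ss_input_tapeL)
  have rok: "\<forall>r\<in>set ?ar. recok r" using dd_lt by (auto simp: recok_def digs_def)
  have r0: "reach N (0, tape_of ?w, 0) (length (dd S) + 4 + length (concat (map rr ?ar)))
           (1, tape_of ?w, int (length (dd S) + 4 + length (concat (map rr ?ar))))"
    by (rule init_lem[OF digs_dd rok w]) (simp add: N_def)
  have br: "brecs bs 0 ?ub [] = ?br"
  proof (cases bs)
    case Nil then show ?thesis by (simp add: brecs_def)
  next
    case (Cons b bs') then show ?thesis by (simp add: brecs_def)
  qed
  have RS: "RSc bs (dd S) [] ?ar 0 ?ub [] = (1, tape_of ?w, int (length (dd S) + 4 + length (concat (map rr ?ar))))"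
    using br w by (simp add: RSc_def)
  have I: "INV S as bs (dd S) [] ?ar 0 ?ub [] id"
    unfolding INV_def using dd_lt by (auto simp: dd_val arok_def digs_def)
  have mu: "mu bs 0 ?ub = length (concat (map rr ?br))"
  proof (cases bs)
    case Nil then show ?thesis by (simp add: mu_def)
  next
    case (Cons b bs')
    have "length (concat (map rr (map (\<lambda>b. (dd b, [], 11::nat)) xs))) = sum_list (map (\<lambda>b. length (dd b) + 1) xs)" for xs
      by (induction xs) auto
    then show ?thesis using Cons by (simp add: mu_def)
  qed
  have muN: "mu bs 0 ?ub \<le> N" using mu w by (simp add: N_def tapeL_def)
  obtain k c where kc: "k \<le> 10 * N * mu bs 0 ?ub + 3 * N" "reach N (RSc bs (dd S) [] ?ar 0 ?ub []) k c"
     "fst c = 11 \<or> fst c = 12" "fst c = 11 \<longleftrightarrow> valid_certificate S as bs"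
    using main_loop[OF I refl] N_def by blast
  have R: "reach N (initial_config MSS ?w) (length (dd S) + 4 + length (concat (map rr ?ar)) + k) c"
    using reach_trans[OF r0 kc(2)[unfolded RS]] by (simp add: initial_MSS)
  have k0: "length (dd S) + 4 + length (concat (map rr ?ar)) \<le> N" using w by (simp add: N_def tapeL_def)
  have N1: "1 \<le> N" using w by (simp add: N_def tapeL_def)
  have A: "10 * N * mu bs 0 ?ub \<le> 10 * (N * N)" using mult_le_mono2[OF muN, of "10 * N"] by simp
  have B: "N \<le> N * N" using N1 by simp
  have K: "length (dd S) + 4 + length (concat (map rr ?ar)) + k \<le> 14 * N ^ 2"
    unfolding power2_eq_square using kc(1) k0 A B by linarith
  show ?thesis using R K kc(3,4) by (intro exI[of _ "length (dd S) + 4 + length (concat (map rr ?ar)) + k"] conjI exI[of _ c]) auto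
qed

lemma halted_fix: "halted MSS c \<Longrightarrow> (tm_step MSS ^^ i) c = c"
proof (induction i)
  case 0 then show ?case by simp
next
  case (Suc i)
  have "tm_step MSS c = c" using Suc.prems by (cases c) (simp add: tm_step_def)
  then show ?case using Suc by simp
qed

theorem mainTheorem4:
  shows "\<exists>M :: tm. wf_tm M \<and>
    (\<exists>c :: nat. \<forall>S as bs.
       let w = ss_input S as bs; n = length w in
       \<exists>t. halts_at M w t \<and> t \<le> c * n ^ 2 \<and> space_used M w t \<le> c * n \<and>
           (fst (tm_run M w t) = tm_accept M \<longleftrightarrow> valid_certificate S as bs))"
proof (intro exI conjI)
  show "wf_tm MSS" by (rule wf_MSS)
  show "\<forall>S as bs. let w = ss_input S as bs; n = length w in
       \<exists>t. halts_at MSS w t \<and> t \<le> 14 * n ^ 2 \<and> space_used MSS w t \<le> 14 * n \<and>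
           (fst (tm_run MSS w t) = tm_accept MSS \<longleftrightarrow> valid_certificate S as bs)"
  proof (intro allI)
    fix S as bs
    let ?w = "ss_input S as bs"
    let ?N = "length ?w"
    obtain k c where kc: "k \<le> 14 * ?N ^ 2" "reach ?N (initial_config MSS ?w) k c" "fst c = 11 \<or> fst c = 12"
      "fst c = 11 \<longleftrightarrow> valid_certificate S as bs"
      using run_all[of S as bs] by blast
    have runk: "tm_run MSS ?w k = c" using kc(2) by (simp add: reach_def tm_run_def)
    have pos: "\<And>i. i \<le> k \<Longrightarrow> -1 \<le> snd (snd (tm_run MSS ?w i)) \<and> snd (snd (tm_run MSS ?w i)) \<le> int ?N"
      using kc(2) by (simp add: reach_def tm_run_def pos_def)
    have hk: "halted MSS (tm_run MSS ?w k)" using runk kc(3) by (auto simp: halted_def MSS_def)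
    define t where "t = (LEAST t. halted MSS (tm_run MSS ?w t))"
    have ht: "halted MSS (tm_run MSS ?w t)" unfolding t_def by (rule LeastI[of _ k], rule hk)
    have tk: "t \<le> k" unfolding t_def by (rule Least_le, rule hk)
    have nt: "\<forall>t' < t. \<not> halted MSS (tm_run MSS ?w t')" unfolding t_def using not_less_Least by blast
    have "tm_run MSS ?w k = (tm_step MSS ^^ (k - t)) (tm_run MSS ?w t)"
      using tk by (simp add: tm_run_def funpow_add[symmetric] comp_def) (metis funpow_add comp_apply le_add_diff_inverse2)
    then have rt: "tm_run MSS ?w t = c" using halted_fix[OF ht] runk by simp
    have sp: "space_used MSS ?w t \<le> ?N + 2"
    proof -
      have sub: "(\<lambda>t'. snd (snd (tm_run MSS ?w t'))) ` {..t} \<subseteq> {-1..int ?N}"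
        using pos tk by auto
      have "space_used MSS ?w t \<le> card {-1..int ?N}"
        unfolding space_used_def by (rule card_mono[OF _ sub]) simp
      then show ?thesis by simp
    qed
    have N1: "1 \<le> ?N" by (simp add: ss_input_def)
    show "let w = ?w; n = length w in
       \<exists>t. halts_at MSS w t \<and> t \<le> 14 * n ^ 2 \<and> space_used MSS w t \<le> 14 * n \<and>
           (fst (tm_run MSS w t) = tm_accept MSS \<longleftrightarrow> valid_certificate S as bs)"
      unfolding Let_def
    proof (intro exI[of _ t] conjI)
      show "halts_at MSS ?w t" using ht nt by (simp add: halts_at_def)
      show "t \<le> 14 * ?N ^ 2" using tk kc(1) by simp
      show "space_used MSS ?w t \<le> 14 * ?N" using sp N1 by simp
      show "fst (tm_run MSS ?w t) = tm_accept MSS \<longleftrightarrow> valid_certificate S as bs"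
        using rt kc(4) by (simp add: MSS_def)
    qed
  qed
qed

end
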